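(* Assume $V=L$. Let $\theta\in\Xi$, $X\in\mathrm{IPS}_\theta$, and let $F:D^\theta\to\mathcal N$ be continuous. Then there is $Y\in\mathrm{IPS}_\theta$ with $Y\subseteq X$ such that one of the following holds: (i) for every $i\in\theta$, $F(y)\notin Y{\Downarrow}i$ for all $y\in Y$; (ii) there is $j\in\theta$ such that $F(y)=y(j)$ for all $y\in Y$, and for every $i\in\theta$ with $i\neq j$, $F(y)\notin Y{\Downarrow}i$ for all $y\in Y$.
   Context: $\mathcal N=\omega^\omega$ is the Baire space, $D=2^\omega\subseteq\mathcal N$ the Cantor space. $T$ is the set of all nonempty finite sequences of countable ordinals, ordered by strict extension $\subset$. $\Xi$ is the set of all at most countable $\xi\subseteq T$ closed downward under $\subset$. $D^\xi$ is the product of $\xi$ copies of $D$ with the product topology; for $\eta\subseteq\xi$ and $x\in D^\xi$, $x\restriction\eta$ is the restriction. For $\zeta\in\Xi$, $\mathrm{IPS}_\zeta$ is the set of all $X\subseteq D^\zeta$ for which there is a homeomorphism $H$ of $D^\zeta$ onto $X$ such that for all $x_0,x_1\in D^\zeta$ and all $\xi\in\Xi$, $\xi\subseteq\zeta$: $x_0\restriction\xi=x_1\restriction\xi\iff H(x_0)\restriction\xi=H(x_1)\restriction\xi$. For $Y\subseteq D^\theta$ and $i\in\theta$, $Y{\Downarrow}i=\{y(i):y\in Y\}$. *)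

theory Defs
  imports "HOL-Analysis.Analysis"
begin

(* Countable ordinals: the field of the successor cardinal of omega, i.e. the
   canonical well-order of type omega_1 (cardSuc natLeq). *)
typedef ord1 = "Field (cardSuc natLeq)"
proof -
  have "Cinfinite (cardSuc natLeq)"
    using Cinfinite_cardSuc natLeq_Card_order natLeq_cinfinite by blast
  then have "infinite (Field (cardSuc natLeq))"
    by (simp add: BNF_Cardinal_Arithmetic.cinfinite_def)
  then show ?thesis by (metis ex_in_conv finite.emptyI)
qed

(* Baire space N = nat => nat (euclidean = product of discrete nat); Cantor space D *)
definition Cantor :: "(nat \<Rightarrow> nat) set" where
  "Cantor = {f. \<forall>n. f n \<in> {0, 1}}"

definition Tseq :: "ord1 list set" where
  "Tseq = {s. s \<noteq> []}"

definition strict_ext :: "ord1 list \<Rightarrow> ord1 list \<Rightarrow> bool" where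
  "strict_ext s t \<longleftrightarrow> (\<exists>u. u \<noteq> [] \<and> t = s @ u)"

definition Xi :: "ord1 list set set" where
  "Xi = {\<xi>. \<xi> \<subseteq> Tseq \<and> countable \<xi> \<and>
              (\<forall>t\<in>\<xi>. \<forall>s\<in>Tseq. strict_ext s t \<longrightarrow> s \<in> \<xi>)}"

(* D^xi with the product topology; points are extensional functions on xi *)
definition Dpow :: "ord1 list set \<Rightarrow> (ord1 list \<Rightarrow> nat \<Rightarrow> nat) topology" where
  "Dpow \<xi> = product_topology (\<lambda>_. subtopology euclidean Cantor) \<xi>"

definition IPS :: "ord1 list set \<Rightarrow> (ord1 list \<Rightarrow> nat \<Rightarrow> nat) set set" where
  "IPS \<zeta> = {X. X \<subseteq> topspace (Dpow \<zeta>) \<and>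
     (\<exists>H. homeomorphic_map (Dpow \<zeta>) (subtopology (Dpow \<zeta>) X) H \<and>
       (\<forall>x0\<in>topspace (Dpow \<zeta>). \<forall>x1\<in>topspace (Dpow \<zeta>). \<forall>\<xi>\<in>Xi. \<xi> \<subseteq> \<zeta> \<longrightarrow>
          (restrict x0 \<xi> = restrict x1 \<xi> \<longleftrightarrow> restrict (H x0) \<xi> = restrict (H x1) \<xi>)))}"

definition proj_at :: "(ord1 list \<Rightarrow> nat \<Rightarrow> nat) set \<Rightarrow> ord1 list \<Rightarrow> (nat \<Rightarrow> nat) set" where
  "proj_at Y i = (\<lambda>y. y i) ` Y"

end

theory Submission
  imports Defs
begin

lemma open_nat_any: "open (S::nat set)"
  by (simp add: open_discrete)

definition down :: "ord1 list \<Rightarrow> ord1 list set" where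
  "down t = {s. s \<noteq> [] \<and> (\<exists>u. t = s @ u)}"

lemma down_self: "t \<noteq> [] \<Longrightarrow> t \<in> down t"
  by (auto simp: down_def)

lemma down_trans: "s \<in> down t \<Longrightarrow> down s \<subseteq> down t"
  by (auto simp: down_def)

lemma down_antisym: "s \<in> down t \<Longrightarrow> t \<in> down s \<Longrightarrow> s = t"
  by (auto simp: down_def)

lemma down_finite: "finite (down t)"
proof -
  have "down t \<subseteq> (\<lambda>k. take k t) ` {..length t}"
  proof
    fix s assume "s \<in> down t"
    then obtain u where "t = s @ u" by (auto simp: down_def)
    then show "s \<in> (\<lambda>k. take k t) ` {..length t}" by (intro image_eqI[of _ _ "length s"]) auto
  qed
  then show ?thesis by (rule finite_subset) auto
qed

lemma down_Xi: "t \<noteq> [] \<Longrightarrow> down t \<in> Xi"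
  unfolding Xi_def
proof (intro CollectI conjI ballI impI)
  show "down t \<subseteq> Tseq" by (auto simp: down_def Tseq_def)
  show "countable (down t)" using down_finite by (rule countable_finite)
  fix t' s assume "t' \<in> down t" "s \<in> Tseq" "strict_ext s t'"
  then show "s \<in> down t" by (auto simp: down_def Tseq_def strict_ext_def)
qed

lemma down_minus_Xi: "t \<noteq> [] \<Longrightarrow> down t - {t} \<in> Xi"
  unfolding Xi_def
proof (intro CollectI conjI ballI impI)
  show "down t - {t} \<subseteq> Tseq" by (auto simp: down_def Tseq_def)
  show "countable (down t - {t})" using down_finite by (intro countable_finite) auto
  fix t' s assume a: "t' \<in> down t - {t}" "s \<in> Tseq" "strict_ext s t'"
  from a obtain u where u: "t = t' @ u" by (auto simp: down_def)
  from a obtain v where v: "t' = s @ v" "v \<noteq> []" by (auto simp: strict_ext_def)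
  have sn: "s \<noteq> []" using a by (auto simp: Tseq_def)
  have uv: "t = s @ (v @ u)" "s \<noteq> []" using u v sn by auto
  have "length s < length t" using u v by auto
  then show "s \<in> down t - {t}" using uv by (auto simp: down_def)
qed

lemma down_sub: "\<theta> \<in> Xi \<Longrightarrow> t \<in> \<theta> \<Longrightarrow> down t \<subseteq> \<theta>"
proof
  fix s assume th: "\<theta> \<in> Xi" "t \<in> \<theta>" and s: "s \<in> down t"
  then obtain u where u: "t = s @ u" "s \<noteq> []" by (auto simp: down_def)
  show "s \<in> \<theta>"
  proof (cases "u = []")
    case True then show ?thesis using u th by simp
  next
    case False
    then have "strict_ext s t" using u by (auto simp: strict_ext_def)
    then show ?thesis using th u unfolding Xi_def Tseq_def by auto
  qed
qed

lemma Xi_nonempty_elem: "\<theta> \<in> Xi \<Longrightarrow> t \<in> \<theta> \<Longrightarrow> t \<noteq> []"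
  by (auto simp: Xi_def Tseq_def)

lemma topD: "topspace (Dpow \<theta>) = (\<Pi>\<^sub>E t\<in>\<theta>. Cantor)"
  by (simp add: Dpow_def topspace_product_topology)

lemma inP_iff: "x \<in> topspace (Dpow \<theta>) \<longleftrightarrow> (\<forall>t\<in>\<theta>. \<forall>q. x t q \<in> {0,1}) \<and> (\<forall>t. t \<notin> \<theta> \<longrightarrow> x t = undefined)"
  by (auto simp: topD PiE_iff extensional_def Cantor_def)

lemma cont_coord: "t \<in> \<theta> \<Longrightarrow> continuous_map (Dpow \<theta>) euclidean (\<lambda>y. y t)"
proof -
  assume t: "t \<in> \<theta>"
  have "continuous_map (Dpow \<theta>) (subtopology euclidean Cantor) (\<lambda>y. y t)"
    unfolding Dpow_def using t by (rule continuous_map_product_projection)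
  then show ?thesis by (simp add: continuous_map_in_subtopology)
qed

lemma cont_pt: "t \<in> \<theta> \<Longrightarrow> continuous_map (Dpow \<theta>) euclidean (\<lambda>y. y t q)"
proof -
  assume t: "t \<in> \<theta>"
  have "continuous_map (Dpow \<theta>) (product_topology (\<lambda>_. euclidean) UNIV) (\<lambda>y. y t)"
    using cont_coord[OF t] by (simp add: euclidean_product_topology)
  then show ?thesis by (simp add: continuous_map_componentwise_UNIV)
qed

lemma openin_pt: "openin (Dpow \<theta>) {y \<in> topspace (Dpow \<theta>). y t q = v}"
proof (cases "t \<in> \<theta>")
  case True
  have "openin (Dpow \<theta>) {y \<in> topspace (Dpow \<theta>). y t q \<in> {v}}"
    by (rule openin_continuous_map_preimage[OF cont_pt[OF True]]) (simp add: open_nat_any)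
  then show ?thesis by simp
next
  case False
  then have "\<forall>y\<in>topspace (Dpow \<theta>). y t = undefined" by (simp add: inP_iff)
  then have "{y \<in> topspace (Dpow \<theta>). y t q = v} = {} \<or> {y \<in> topspace (Dpow \<theta>). y t q = v} = topspace (Dpow \<theta>)"
    by auto
  then show ?thesis by (metis (no_types, lifting) openin_empty openin_topspace)
qed

lemma openin_cyl: "finite E \<Longrightarrow> openin (Dpow \<theta>) {y \<in> topspace (Dpow \<theta>). \<forall>e\<in>E. y (fst e) (snd e) = c e}"
proof (induction E rule: finite_induct)
  case empty then show ?case by simp
next
  case (insert e E)
  have eq: "{y \<in> topspace (Dpow \<theta>). \<forall>e'\<in>insert e E. y (fst e') (snd e') = c e'} =
        {y \<in> topspace (Dpow \<theta>). y (fst e) (snd e) = c e} \<inter> {y \<in> topspace (Dpow \<theta>). \<forall>e\<in>E. y (fst e) (snd e) = c e}"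
    by auto
  show ?case unfolding eq by (intro openin_Int openin_pt insert.IH)
qed

lemma loc_const_cont:
  assumes "\<And>z. z \<in> topspace X \<Longrightarrow> \<exists>U. openin X U \<and> z \<in> U \<and> (\<forall>y\<in>U. f y = f z)"
  shows "continuous_map X (euclidean::'b::topological_space topology) f"
proof -
  have "openin X {x \<in> topspace X. f x \<in> U}" for U :: "'b set"
  proof (rule iffD2[OF openin_subopen], rule ballI)
    fix z assume z: "z \<in> {x \<in> topspace X. f x \<in> U}"
    then have zt: "z \<in> topspace X" and fz: "f z \<in> U" by auto
    obtain V where V: "openin X V" "z \<in> V" "\<And>y. y \<in> V \<Longrightarrow> f y = f z" using assms[OF zt] by blast
    have "V \<subseteq> {x \<in> topspace X. f x \<in> U}"
    proof
      fix y assume y: "y \<in> V"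
      then have "y \<in> topspace X" using openin_subset[OF V(1)] by blast
      moreover have "f y \<in> U" using V(3)[OF y] fz by simp
      ultimately show "y \<in> {x \<in> topspace X. f x \<in> U}" by simp
    qed
    then show "\<exists>T. openin X T \<and> z \<in> T \<and> T \<subseteq> {x \<in> topspace X. f x \<in> U}" using V(1,2) by blast
  qed
  then show ?thesis by (simp add: continuous_map_def)
qed

lemma open_fun_cyl:
  assumes "open (Op :: (nat \<Rightarrow> nat) set)" "f \<in> Op"
  shows "\<exists>L. \<forall>g. (\<forall>q<L. g q = f q) \<longrightarrow> g \<in> Op"
proof -
  have "openin (product_topology (\<lambda>i. euclidean) UNIV) Op" using assms(1) by (simp add: open_fun_def)
  then obtain U where U: "finite {i \<in> UNIV. U i \<noteq> topspace euclidean}" "\<forall>i\<in>UNIV. openin euclidean (U i)"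
    "f \<in> Pi\<^sub>E UNIV U" "Pi\<^sub>E UNIV U \<subseteq> Op"
    using assms(2) unfolding openin_product_topology_alt by blast
  obtain L where L: "{i \<in> UNIV. U i \<noteq> topspace euclidean} \<subseteq> {..<L}" using finite_nat_bounded[OF U(1)] by blast
  have "g \<in> Op" if g: "\<forall>q<L. g q = f q" for g
  proof -
    have "g \<in> Pi\<^sub>E UNIV U"
    proof (unfold PiE_iff, intro conjI ballI)
      fix i :: nat
      show "g i \<in> U i"
      proof (cases "i < L")
        case True
        have "g i = f i" using g True by simp
        moreover have "f i \<in> U i" using U(3) by (simp add: PiE_iff)
        ultimately show ?thesis by simp
      next
        case False
        then have "U i = topspace euclidean" using L by blast
        then show ?thesis by simp
      qed
    qed simp
    then show ?thesis using U(4) by blast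
  qed
  then show ?thesis by blast
qed

lemma openin_cyl_inside:
  assumes "openin (Dpow \<theta>) U" "x \<in> U"
  shows "\<exists>C L. finite C \<and> C \<subseteq> \<theta> \<and> (\<forall>y\<in>topspace (Dpow \<theta>). (\<forall>t\<in>C. \<forall>q<L. y t q = x t q) \<longrightarrow> y \<in> U)"
proof -
  obtain V where V: "finite {i \<in> \<theta>. V i \<noteq> topspace (subtopology euclidean Cantor)}"
     "\<forall>i\<in>\<theta>. openin (subtopology euclidean Cantor) (V i)" "x \<in> Pi\<^sub>E \<theta> V" "Pi\<^sub>E \<theta> V \<subseteq> U"
  proof -
    have "openin (product_topology (\<lambda>_. subtopology euclidean Cantor) \<theta>) U" using assms(1) by (simp add: Dpow_def)
    then have "\<forall>x\<in>U. \<exists>V. finite {i \<in> \<theta>. V i \<noteq> topspace (subtopology euclidean Cantor)} \<and>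
      (\<forall>i\<in>\<theta>. openin (subtopology euclidean Cantor) (V i)) \<and> x \<in> Pi\<^sub>E \<theta> V \<and> Pi\<^sub>E \<theta> V \<subseteq> U"
      by (simp only: openin_product_topology_alt)
    then show ?thesis using assms(2) that by blast
  qed
  define C where "C = {i \<in> \<theta>. V i \<noteq> Cantor}"
  have tc: "topspace (subtopology euclidean Cantor) = Cantor" by simp
  have C: "finite C" "C \<subseteq> \<theta>" using V(1) unfolding C_def tc by auto
  have ex: "\<exists>L. \<forall>g. (\<forall>q<L. g q = x i q) \<longrightarrow> g \<in> Cantor \<longrightarrow> g \<in> V i" if i: "i \<in> C" for i
  proof -
    have "i \<in> \<theta>" using i C by blast
    then have "openin (subtopology euclidean Cantor) (V i)" using V(2) by blast
    then obtain Op where O: "open Op" "V i = Op \<inter> Cantor" unfolding openin_subtopology by auto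
    have "x i \<in> V i" using V(3) \<open>i \<in> \<theta>\<close> by (simp add: PiE_iff)
    then have "x i \<in> Op" using O by blast
    then obtain L where "\<forall>g. (\<forall>q<L. g q = x i q) \<longrightarrow> g \<in> Op" using open_fun_cyl O by blast
    then show ?thesis using O by blast
  qed
  obtain Lf where Lf: "\<And>i g. i \<in> C \<Longrightarrow> (\<forall>q<Lf i. g q = x i q) \<Longrightarrow> g \<in> Cantor \<Longrightarrow> g \<in> V i"
  proof -
    have "\<forall>i. \<exists>L. i \<in> C \<longrightarrow> (\<forall>g. (\<forall>q<L. g q = x i q) \<longrightarrow> g \<in> Cantor \<longrightarrow> g \<in> V i)"
      using ex by blast
    then obtain Lf where "\<forall>i. i \<in> C \<longrightarrow> (\<forall>g. (\<forall>q<Lf i. g q = x i q) \<longrightarrow> g \<in> Cantor \<longrightarrow> g \<in> V i)"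
      by (rule choice_iff[THEN iffD1, elim_format]) blast
    then show ?thesis using that by blast
  qed
  define L where "L = (\<Sum>i\<in>C. Lf i)"
  have LL: "Lf i \<le> L" if "i \<in> C" for i unfolding L_def using C(1) that by (simp add: member_le_sum)
  have "y \<in> U" if y: "y \<in> topspace (Dpow \<theta>)" "\<forall>t\<in>C. \<forall>q<L. y t q = x t q" for y
  proof -
    have yP: "y \<in> (\<Pi>\<^sub>E t\<in>\<theta>. Cantor)" using y(1) by (simp add: topD)
    have "y \<in> Pi\<^sub>E \<theta> V"
    proof (unfold PiE_iff, intro conjI ballI)
      fix i assume i: "i \<in> \<theta>"
      have yc: "y i \<in> Cantor" using yP i by (simp add: PiE_iff)
      show "y i \<in> V i"
      proof (cases "i \<in> C")
        case True
        have "\<forall>q<Lf i. y i q = x i q"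
        proof (intro allI impI)
          fix q assume "q < Lf i"
          then have "q < L" using LL[OF True] by linarith
          then show "y i q = x i q" using y(2) True by blast
        qed
        then show ?thesis using Lf[OF True _ yc] by blast
      next
        case False
        then have "V i = Cantor" using i unfolding C_def by blast
        then show ?thesis using yc by simp
      qed
    next
      show "y \<in> extensional \<theta>" using yP by (simp add: PiE_iff)
    qed
    then show ?thesis using V(4) by blast
  qed
  then show ?thesis using C by blast
qed

lemma cont_bit_cyl:
  assumes "continuous_map (Dpow \<theta>) euclidean (\<Phi> :: _ \<Rightarrow> nat \<Rightarrow> nat)" "x \<in> topspace (Dpow \<theta>)"
  shows "\<exists>C L. finite C \<and> C \<subseteq> \<theta> \<and> (\<forall>y\<in>topspace (Dpow \<theta>). (\<forall>t\<in>C. \<forall>q<L. y t q = x t q) \<longrightarrow> \<Phi> y k = \<Phi> x k)"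
proof -
  have "continuous_map (Dpow \<theta>) (product_topology (\<lambda>_. euclidean) UNIV) \<Phi>"
    using assms(1) by (simp add: euclidean_product_topology)
  then have c: "continuous_map (Dpow \<theta>) euclidean (\<lambda>y. \<Phi> y k)" by (simp add: continuous_map_componentwise_UNIV)
  have "openin (Dpow \<theta>) {y \<in> topspace (Dpow \<theta>). \<Phi> y k \<in> {\<Phi> x k}}"
    by (rule openin_continuous_map_preimage[OF c]) (simp add: open_nat_any)
  from openin_cyl_inside[OF this] assms(2) show ?thesis by auto
qed

definition flip :: "(ord1 list \<Rightarrow> nat \<Rightarrow> nat) \<Rightarrow> ord1 list \<Rightarrow> nat \<Rightarrow> (ord1 list \<Rightarrow> nat \<Rightarrow> nat)" where
  "flip x t L = x(t := (x t)(L := 1 - x t L))"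

lemma flip_P: "x \<in> topspace (Dpow \<theta>) \<Longrightarrow> t \<in> \<theta> \<Longrightarrow> flip x t L \<in> topspace (Dpow \<theta>)"
  unfolding inP_iff flip_def by auto

lemma flip_ne: "x t L \<in> {0,1} \<Longrightarrow> flip x t L t \<noteq> x t"
  unfolding flip_def by (auto dest: fun_cong[where x = L])

lemma flip_other: "s \<noteq> t \<Longrightarrow> flip x t L s = x s"
  unfolding flip_def by simp

lemma flip_low: "q < L \<Longrightarrow> flip x t L t q = x t q"
  unfolding flip_def by simp

locale ips =
  fixes \<theta> :: "ord1 list set" and X :: "(ord1 list \<Rightarrow> nat \<Rightarrow> nat) set" and H Hi
  assumes th: "\<theta> \<in> Xi"
    and hm: "homeomorphic_maps (Dpow \<theta>) (subtopology (Dpow \<theta>) X) H Hi"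
    and rs: "\<And>x0 x1 \<xi>. x0 \<in> topspace (Dpow \<theta>) \<Longrightarrow> x1 \<in> topspace (Dpow \<theta>) \<Longrightarrow> \<xi> \<in> Xi \<Longrightarrow> \<xi> \<subseteq> \<theta> \<Longrightarrow>
             (restrict x0 \<xi> = restrict x1 \<xi> \<longleftrightarrow> restrict (H x0) \<xi> = restrict (H x1) \<xi>)"
begin

abbreviation P where "P \<equiv> topspace (Dpow \<theta>)"

lemma H_cont_sub: "continuous_map (Dpow \<theta>) (subtopology (Dpow \<theta>) X) H"
  using hm by (simp add: homeomorphic_maps_def)

lemma H_cont: "continuous_map (Dpow \<theta>) (Dpow \<theta>) H"
  using H_cont_sub by (simp add: continuous_map_in_subtopology)

lemma H_in: "x \<in> P \<Longrightarrow> H x \<in> P \<and> H x \<in> X"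
  using H_cont_sub by (auto simp: continuous_map_in_subtopology dest: continuous_map_image_subset_topspace)

lemma h_cont: "i \<in> \<theta> \<Longrightarrow> continuous_map (Dpow \<theta>) euclidean (\<lambda>x. H x i)"
  using continuous_map_compose[OF H_cont cont_coord[of i \<theta>]] by (simp add: o_def)

lemma h_dep:
  assumes i: "i \<in> \<theta>" and x: "x \<in> P" and y: "y \<in> P" and e: "\<forall>s\<in>down i. x s = y s"
  shows "H x i = H y i"
proof -
  have ne: "i \<noteq> []" using Xi_nonempty_elem[OF th i] .
  have "restrict x (down i) = restrict y (down i)" using e by (auto simp: restrict_def)
  then have "restrict (H x) (down i) = restrict (H y) (down i)"
    using rs[OF x y down_Xi[OF ne] down_sub[OF th i]] by simp
  then show ?thesis using down_self[OF ne] by (metis restrict_apply')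
qed

lemma h_vary:
  assumes i: "i \<in> \<theta>" and x: "x \<in> P" and y: "y \<in> P" and e: "\<forall>s. s \<noteq> i \<longrightarrow> x s = y s" and d: "x i \<noteq> y i"
  shows "H x i \<noteq> H y i"
proof
  assume eq: "H x i = H y i"
  have ne: "i \<noteq> []" using Xi_nonempty_elem[OF th i] .
  have sub1: "down i \<subseteq> \<theta>" using down_sub[OF th i] .
  have sub2: "down i - {i} \<subseteq> \<theta>" using sub1 by blast
  have "restrict x (down i - {i}) = restrict y (down i - {i})" using e by (auto simp: restrict_def)
  then have r2: "restrict (H x) (down i - {i}) = restrict (H y) (down i - {i})"
    using rs[OF x y down_minus_Xi[OF ne] sub2] by simp
  have "restrict (H x) (down i) = restrict (H y) (down i)"
  proof (rule ext)
    fix s show "restrict (H x) (down i) s = restrict (H y) (down i) s"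
    proof (cases "s \<in> down i - {i}")
      case True
      then show ?thesis using fun_cong[OF r2, of s] by simp
    next
      case False
      then show ?thesis using eq by (cases "s = i") auto
    qed
  qed
  then have "restrict x (down i) = restrict y (down i)"
    using rs[OF x y down_Xi[OF ne] sub1] by simp
  then have "x i = y i" using down_self[OF ne] by (metis restrict_apply')
  then show False using d by simp
qed

lemma h_flip:
  assumes i: "i \<in> \<theta>" and x: "x \<in> P"
  shows "H (flip x i L) i \<noteq> H x i"
proof -
  have "x i L \<in> {0,1}" using x i by (simp add: inP_iff)
  then have "flip x i L i \<noteq> x i" by (rule flip_ne)
  then show ?thesis using h_vary[OF i flip_P[OF x i] x] flip_other by metis
qed

lemma nd_pair:
  assumes i: "i \<in> \<theta>" and j: "j \<in> \<theta>" and ij: "i \<noteq> j" and O: "openin (Dpow \<theta>) Op" "Op \<noteq> {}"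
  shows "\<exists>x\<in>Op. H x j \<noteq> H x i"
proof -
  obtain x where x: "x \<in> Op" using O by blast
  have xP: "x \<in> P" using x openin_subset[OF O(1)] by blast
  obtain C L where CL: "finite C" "C \<subseteq> \<theta>" "\<forall>y\<in>P. (\<forall>t\<in>C. \<forall>q<L. y t q = x t q) \<longrightarrow> y \<in> Op"
    using openin_cyl_inside[OF O(1) x] by blast
  have fl: "flip x k L \<in> Op" if "k \<in> \<theta>" for k
    using CL(3) flip_P[OF xP that] flip_low flip_other by metis
  have "j \<notin> down i \<or> i \<notin> down j" using down_antisym ij by blast
  then show ?thesis
  proof
    assume nj: "j \<notin> down i"
    have "\<forall>s\<in>down i. flip x j L s = x s" using nj flip_other by metis
    then have hi: "H (flip x j L) i = H x i" using h_dep[OF i flip_P[OF xP j] xP] by blast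
    have hj: "H (flip x j L) j \<noteq> H x j" using h_flip[OF j xP] .
    show ?thesis
    proof (cases "H x j = H x i")
      case True
      then show ?thesis using hi hj fl[OF j] by (intro bexI[of _ "flip x j L"]) auto
    next
      case False then show ?thesis using x by blast
    qed
  next
    assume ni: "i \<notin> down j"
    have "\<forall>s\<in>down j. flip x i L s = x s" using ni flip_other by metis
    then have hj: "H (flip x i L) j = H x j" using h_dep[OF j flip_P[OF xP i] xP] by blast
    have hi: "H (flip x i L) i \<noteq> H x i" using h_flip[OF i xP] .
    show ?thesis
    proof (cases "H x j = H x i")
      case True
      then show ?thesis using hi hj fl[OF i] by (intro bexI[of _ "flip x i L"]) auto
    next
      case False then show ?thesis using x by blast
    qed
  qed
qed

end

type_synonym pt = "ord1 list \<Rightarrow> nat \<Rightarrow> nat"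
type_synonym wst = "pt \<Rightarrow> ord1 list \<Rightarrow> nat list"

definition agree :: "(ord1 list \<times> nat) set \<Rightarrow> pt \<Rightarrow> pt \<Rightarrow> ord1 list \<Rightarrow> bool" where
  "agree R z w t \<longleftrightarrow> (\<forall>t'\<in>down t. \<forall>m. (t', m) \<in> R \<longrightarrow> z t' m = w t' m)"

lemma agree_refl: "agree R z z t" by (simp add: agree_def)
lemma agree_sym: "agree R z w t \<Longrightarrow> agree R w z t" by (simp add: agree_def)
lemma agree_trans: "agree R z w t \<Longrightarrow> agree R w v t \<Longrightarrow> agree R z v t" by (simp add: agree_def)
lemma agree_down: "agree R z w t \<Longrightarrow> s \<in> down t \<Longrightarrow> agree R z w s"
  unfolding agree_def using down_trans by blast
lemma agree_mono: "agree R' z w t \<Longrightarrow> R \<subseteq> R' \<Longrightarrow> agree R z w t"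
  unfolding agree_def by blast

definition Inv :: "ord1 list set \<Rightarrow> (ord1 list \<times> nat) set \<Rightarrow> wst \<Rightarrow> bool" where
  "Inv \<theta> R W \<longleftrightarrow> finite R \<and> (\<forall>e\<in>R. fst e \<in> \<theta>) \<and>
     (\<forall>z\<in>topspace (Dpow \<theta>). \<forall>w\<in>topspace (Dpow \<theta>). \<forall>t. agree R z w t \<longrightarrow> W z t = W w t) \<and>
     (\<forall>z\<in>topspace (Dpow \<theta>). \<forall>w\<in>topspace (Dpow \<theta>). \<forall>t. length (W z t) = length (W w t)) \<and>
     (\<exists>C. finite C \<and> C \<subseteq> \<theta> \<and> (\<forall>z\<in>topspace (Dpow \<theta>). \<forall>t. t \<notin> C \<longrightarrow> W z t = [])) \<and>
     (\<forall>z\<in>topspace (Dpow \<theta>). \<forall>t. set (W z t) \<subseteq> {0,1}) \<and>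
     (\<forall>e\<in>R. \<exists>p. \<forall>z\<in>topspace (Dpow \<theta>). p < length (W z (fst e)) \<and> W z (fst e) ! p = z (fst e) (snd e))"

definition Ext :: "ord1 list set \<Rightarrow> wst \<Rightarrow> wst \<Rightarrow> bool" where
  "Ext \<theta> W W' \<longleftrightarrow> (\<forall>z\<in>topspace (Dpow \<theta>). \<forall>t. \<exists>u. W' z t = W z t @ u)"

definition Box :: "ord1 list set \<Rightarrow> wst \<Rightarrow> pt \<Rightarrow> pt set" where
  "Box \<theta> W z = {x \<in> topspace (Dpow \<theta>). \<forall>t. \<forall>q<length (W z t). x t q = W z t ! q}"

lemma Ext_refl: "Ext \<theta> W W" by (auto simp: Ext_def)
lemma Ext_trans: "Ext \<theta> W1 W2 \<Longrightarrow> Ext \<theta> W2 W3 \<Longrightarrow> Ext \<theta> W1 W3"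
proof -
  assume a: "Ext \<theta> W1 W2" "Ext \<theta> W2 W3"
  show ?thesis unfolding Ext_def
  proof (intro ballI allI)
    fix z t assume z: "z \<in> topspace (Dpow \<theta>)"
    obtain u where "W2 z t = W1 z t @ u" using a(1) z by (auto simp: Ext_def)
    moreover obtain v where "W3 z t = W2 z t @ v" using a(2) z by (auto simp: Ext_def)
    ultimately show "\<exists>u. W3 z t = W1 z t @ u" by simp
  qed
qed

lemma Inv_dep: "Inv \<theta> R W \<Longrightarrow> z \<in> topspace (Dpow \<theta>) \<Longrightarrow> w \<in> topspace (Dpow \<theta>) \<Longrightarrow> agree R z w t \<Longrightarrow> W z t = W w t"
proof -
  assume a: "Inv \<theta> R W" "z \<in> topspace (Dpow \<theta>)" "w \<in> topspace (Dpow \<theta>)" "agree R z w t"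
  have "\<forall>z\<in>topspace (Dpow \<theta>). \<forall>w\<in>topspace (Dpow \<theta>). \<forall>t. agree R z w t \<longrightarrow> W z t = W w t"
    using a(1)[unfolded Inv_def] by (elim conjE) assumption
  then show ?thesis using a(2-4) by blast
qed
lemma Inv_len: "Inv \<theta> R W \<Longrightarrow> z \<in> topspace (Dpow \<theta>) \<Longrightarrow> w \<in> topspace (Dpow \<theta>) \<Longrightarrow> length (W z t) = length (W w t)"
proof -
  assume a: "Inv \<theta> R W" "z \<in> topspace (Dpow \<theta>)" "w \<in> topspace (Dpow \<theta>)"
  have "\<forall>z\<in>topspace (Dpow \<theta>). \<forall>w\<in>topspace (Dpow \<theta>). \<forall>t. length (W z t) = length (W w t)"
    using a(1)[unfolded Inv_def] by (elim conjE) assumption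
  then show ?thesis using a(2-3) by blast
qed
lemma Inv_supp: "Inv \<theta> R W \<Longrightarrow> \<exists>C. finite C \<and> C \<subseteq> \<theta> \<and> (\<forall>z\<in>topspace (Dpow \<theta>). \<forall>t. t \<notin> C \<longrightarrow> W z t = [])"
  unfolding Inv_def by (elim conjE) assumption
lemma Inv_bits: "Inv \<theta> R W \<Longrightarrow> z \<in> topspace (Dpow \<theta>) \<Longrightarrow> set (W z t) \<subseteq> {0,1}"
proof -
  assume a: "Inv \<theta> R W" "z \<in> topspace (Dpow \<theta>)"
  have "\<forall>z\<in>topspace (Dpow \<theta>). \<forall>t. set (W z t) \<subseteq> {0,1}"
    using a(1)[unfolded Inv_def] by (elim conjE) assumption
  then show ?thesis using a(2) by blast
qed

lemma Inv_pos: "Inv \<theta> R W \<Longrightarrow> e \<in> R \<Longrightarrow> \<exists>p. \<forall>z\<in>topspace (Dpow \<theta>). p < length (W z (fst e)) \<and> W z (fst e) ! p = z (fst e) (snd e)"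
proof -
  assume a: "Inv \<theta> R W" "e \<in> R"
  have "\<forall>e\<in>R. \<exists>p. \<forall>z\<in>topspace (Dpow \<theta>). p < length (W z (fst e)) \<and> W z (fst e) ! p = z (fst e) (snd e)"
    using a(1)[unfolded Inv_def] by (elim conjE) assumption
  then show ?thesis using a(2) by blast
qed

lemma Inv_R: "Inv \<theta> R W \<Longrightarrow> finite R \<and> (\<forall>e\<in>R. fst e \<in> \<theta>)"
  unfolding Inv_def by (elim conjE) (intro conjI; assumption)

lemma Box_sub: "Box \<theta> W z \<subseteq> topspace (Dpow \<theta>)" by (auto simp: Box_def)

lemma Box_mono: "Ext \<theta> W W' \<Longrightarrow> z \<in> topspace (Dpow \<theta>) \<Longrightarrow> Box \<theta> W' z \<subseteq> Box \<theta> W z"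
proof
  fix x assume e: "Ext \<theta> W W'" and z: "z \<in> topspace (Dpow \<theta>)" and x: "x \<in> Box \<theta> W' z"
  show "x \<in> Box \<theta> W z" unfolding Box_def
  proof (intro CollectI conjI allI impI)
    show "x \<in> topspace (Dpow \<theta>)" using x by (simp add: Box_def)
    fix t q assume q: "q < length (W z t)"
    obtain u where u: "W' z t = W z t @ u" using e z by (auto simp: Ext_def)
    have "x t q = W' z t ! q" using x q u by (auto simp: Box_def)
    also have "\<dots> = W z t ! q" using u q by (simp add: nth_append)
    finally show "x t q = W z t ! q" .
  qed
qed

lemma Box_open:
  assumes inv: "Inv \<theta> R W" and z: "z \<in> topspace (Dpow \<theta>)"
  shows "openin (Dpow \<theta>) (Box \<theta> W z)"
proof -
  obtain C where C: "finite C" "C \<subseteq> \<theta>" "\<forall>z\<in>topspace (Dpow \<theta>). \<forall>t. t \<notin> C \<longrightarrow> W z t = []"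
    using Inv_supp[OF inv] by blast
  define E where "E = (SIGMA t:C. {..<length (W z t)})"
  have fE: "finite E" unfolding E_def using C(1) by auto
  have "Box \<theta> W z = {y \<in> topspace (Dpow \<theta>). \<forall>e\<in>E. y (fst e) (snd e) = W z (fst e) ! snd e}"
  proof (intro set_eqI iffI)
    fix y assume "y \<in> Box \<theta> W z"
    then show "y \<in> {y \<in> topspace (Dpow \<theta>). \<forall>e\<in>E. y (fst e) (snd e) = W z (fst e) ! snd e}"
      by (auto simp: Box_def E_def)
  next
    fix y assume y: "y \<in> {y \<in> topspace (Dpow \<theta>). \<forall>e\<in>E. y (fst e) (snd e) = W z (fst e) ! snd e}"
    show "y \<in> Box \<theta> W z" unfolding Box_def
    proof (intro CollectI conjI allI impI)
      show "y \<in> topspace (Dpow \<theta>)" using y by simp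
      fix t q assume q: "q < length (W z t)"
      then have "t \<in> C" using C(3) z by fastforce
      then have "(t, q) \<in> E" using q by (simp add: E_def)
      then show "y t q = W z t ! q" using y by fastforce
    qed
  qed
  then show ?thesis using openin_cyl[OF fE] by simp
qed

definition bx :: "ord1 list set \<Rightarrow> wst \<Rightarrow> pt \<Rightarrow> pt" where
  "bx \<theta> W z = (\<lambda>t. if t \<in> \<theta> then (\<lambda>q. if q < length (W z t) then W z t ! q else 0) else undefined)"

lemma bx_in:
  assumes inv: "Inv \<theta> R W" and z: "z \<in> topspace (Dpow \<theta>)"
  shows "bx \<theta> W z \<in> Box \<theta> W z"
proof -
  obtain C where C: "finite C" "C \<subseteq> \<theta>" "\<forall>z\<in>topspace (Dpow \<theta>). \<forall>t. t \<notin> C \<longrightarrow> W z t = []"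
    using Inv_supp[OF inv] by blast
  have P: "bx \<theta> W z \<in> topspace (Dpow \<theta>)" unfolding inP_iff
  proof (intro conjI ballI allI impI)
    fix t q assume t: "t \<in> \<theta>"
    show "bx \<theta> W z t q \<in> {0, 1}"
    proof (cases "q < length (W z t)")
      case True
      then have "W z t ! q \<in> set (W z t)" by simp
      then have "W z t ! q \<in> {0,1}" using Inv_bits[OF inv z, of t] by blast
      then show ?thesis using True t by (simp add: bx_def)
    qed (simp add: bx_def t)
  qed (simp add: bx_def)
  show ?thesis unfolding Box_def
  proof (intro CollectI conjI allI impI P)
    fix t q assume q: "q < length (W z t)"
    then have "t \<in> \<theta>" using C z by fastforce
    then show "bx \<theta> W z t q = W z t ! q" using q by (simp add: bx_def)
  qed
qed

lemma Box_ne: "Inv \<theta> R W \<Longrightarrow> z \<in> topspace (Dpow \<theta>) \<Longrightarrow> Box \<theta> W z \<noteq> {}"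
  using bx_in by blast

lemma Box_dep: "Inv \<theta> R W \<Longrightarrow> z \<in> topspace (Dpow \<theta>) \<Longrightarrow> w \<in> topspace (Dpow \<theta>) \<Longrightarrow> (\<And>t. agree R z w t) \<Longrightarrow> Box \<theta> W z = Box \<theta> W w"
proof -
  assume a: "Inv \<theta> R W" "z \<in> topspace (Dpow \<theta>)" "w \<in> topspace (Dpow \<theta>)" "\<And>t. agree R z w t"
  have "W z = W w" using Inv_dep[OF a(1-3) a(4)] by (rule ext)
  then show ?thesis by (simp add: Box_def)
qed

lemma nth_app_map: "length w = n \<Longrightarrow> n \<le> q \<Longrightarrow> q < L \<Longrightarrow> (w @ map f [n..<L]) ! q = f q"
  by (simp add: nth_append)

lemma nth_app_lt: "q < length w \<Longrightarrow> (w @ u) ! q = w ! q"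
  by (simp add: nth_append)

lemma InvI:
  assumes "finite R" "\<forall>e\<in>R. fst e \<in> \<theta>"
    "\<forall>z\<in>topspace (Dpow \<theta>). \<forall>w\<in>topspace (Dpow \<theta>). \<forall>t. agree R z w t \<longrightarrow> W z t = W w t"
    "\<forall>z\<in>topspace (Dpow \<theta>). \<forall>w\<in>topspace (Dpow \<theta>). \<forall>t. length (W z t) = length (W w t)"
    "\<exists>C. finite C \<and> C \<subseteq> \<theta> \<and> (\<forall>z\<in>topspace (Dpow \<theta>). \<forall>t. t \<notin> C \<longrightarrow> W z t = [])"
    "\<forall>z\<in>topspace (Dpow \<theta>). \<forall>t. set (W z t) \<subseteq> {0,1}"
    "\<forall>e\<in>R. \<exists>p. \<forall>z\<in>topspace (Dpow \<theta>). p < length (W z (fst e)) \<and> W z (fst e) ! p = z (fst e) (snd e)"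
  shows "Inv \<theta> R W"
  unfolding Inv_def by (intro conjI assms)

context ips begin

lemma sep_pair:
  assumes inv: "Inv \<theta> R W" and z0: "z0 \<in> P" and w0: "w0 \<in> P"
    and Pc: "continuous_map (Dpow \<theta>) euclidean \<Phi>" and i: "i \<in> \<theta>"
    and nd: "\<And>Op. openin (Dpow \<theta>) Op \<Longrightarrow> Op \<noteq> {} \<Longrightarrow> \<exists>x\<in>Op. \<Phi> x \<noteq> H x i"
  shows "\<exists>W'. Inv \<theta> R W' \<and> Ext \<theta> W W' \<and> (\<forall>x\<in>Box \<theta> W' z0. \<forall>y\<in>Box \<theta> W' w0. \<Phi> x \<noteq> H y i)"
proof -
  define S where "S = {t. agree R z0 w0 t}"
  define b where "b = bx \<theta> W w0"
  have b: "b \<in> Box \<theta> W w0" using bx_in[OF inv w0] b_def by simp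
  define mix where "mix x = (\<lambda>t. if t \<in> S then x t else b t)" for x :: pt
  have mix: "mix x \<in> Box \<theta> W w0" if x: "x \<in> Box \<theta> W z0" for x
  proof -
    have xP: "x \<in> P" and bP: "b \<in> P" using x b by (auto simp: Box_def)
    have "mix x \<in> P" unfolding inP_iff
    proof (intro conjI allI ballI impI)
      fix t q assume "t \<in> \<theta>"
      then show "mix x t q \<in> {0, 1}" using xP bP unfolding inP_iff mix_def by auto
    next
      fix t assume "t \<notin> \<theta>"
      then show "mix x t = undefined" using xP bP unfolding inP_iff mix_def by auto
    qed
    moreover have "\<forall>t. \<forall>q<length (W w0 t). mix x t q = W w0 t ! q"
    proof (intro allI impI)
      fix t q assume q: "q < length (W w0 t)"
      show "mix x t q = W w0 t ! q"
      proof (cases "t \<in> S")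
        case True
        then have e: "W z0 t = W w0 t" using Inv_dep[OF inv z0 w0] S_def by simp
        have "x t q = W z0 t ! q" using x q e by (simp add: Box_def)
        then show ?thesis using e True by (simp add: mix_def)
      next
        case False then show ?thesis using b q by (simp add: mix_def Box_def)
      qed
    qed
    ultimately show ?thesis by (simp add: Box_def)
  qed
  have mixS: "\<forall>t\<in>S. mix x t = x t" for x by (simp add: mix_def)
  have Sdown: "s \<in> S" if "t \<in> S" "s \<in> down t" for s t using that agree_down S_def by blast

  obtain x y where xy: "x \<in> Box \<theta> W z0" "y \<in> Box \<theta> W w0" "\<forall>t\<in>S. x t = y t" "\<Phi> x \<noteq> H y i"
  proof (cases "i \<in> S")
    case True
    obtain x where x: "x \<in> Box \<theta> W z0" "\<Phi> x \<noteq> H x i"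
      using nd[OF Box_open[OF inv z0] Box_ne[OF inv z0]] by blast
    have xP: "x \<in> P" using x(1) Box_sub by blast
    have mP: "mix x \<in> P" using mix[OF x(1)] Box_sub by blast
    have "\<forall>s\<in>down i. mix x s = x s" using Sdown[OF True] mixS by blast
    then have "H (mix x) i = H x i" using h_dep[OF i mP xP] by blast
    then show ?thesis using that[OF x(1) mix[OF x(1)]] mixS x(2) by auto
  next
    case False
    define x where "x = bx \<theta> W z0"
    have x: "x \<in> Box \<theta> W z0" using bx_in[OF inv z0] x_def by simp
    show ?thesis
    proof (cases "\<Phi> x = H (mix x) i")
      case False
      then show ?thesis using that[OF x mix[OF x]] mixS by auto
    next
      case True
      define L where "L = length (W w0 i)"
      define y where "y = flip (mix x) i L"
      have mB: "mix x \<in> Box \<theta> W w0" using mix[OF x] .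
      have mP: "mix x \<in> P" using mB Box_sub by blast
      have yP: "y \<in> P" unfolding y_def using flip_P[OF mP i] .
      have yB: "y \<in> Box \<theta> W w0" unfolding Box_def
      proof (intro CollectI conjI allI impI yP)
        fix t q assume q: "q < length (W w0 t)"
        have "mix x t q = W w0 t ! q" using mB q by (simp add: Box_def)
        moreover have "y t q = mix x t q"
        proof (cases "t = i")
          case True then show ?thesis using q flip_low unfolding y_def L_def by simp
        next
          case False then show ?thesis using flip_other unfolding y_def by metis
        qed
        ultimately show "y t q = W w0 t ! q" by simp
      qed
      have yS: "\<forall>t\<in>S. x t = y t"
      proof
        fix t assume t: "t \<in> S"
        then have "t \<noteq> i" using \<open>i \<notin> S\<close> by blast
        then have "y t = mix x t" unfolding y_def by (rule flip_other)
        then show "x t = y t" using mixS t by simp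
      qed
      have "H y i \<noteq> H (mix x) i" unfolding y_def using h_flip[OF i mP] .
      then have "\<Phi> x \<noteq> H y i" using True by simp
      then show ?thesis using that[OF x yB yS] by blast
    qed
  qed
  have xP: "x \<in> P" using xy(1) Box_sub by blast
  have yP: "y \<in> P" using xy(2) Box_sub by blast
  have "\<exists>k. \<Phi> x k \<noteq> H y i k" using xy(4) by (simp add: fun_eq_iff)
  then obtain k where k: "\<Phi> x k \<noteq> H y i k" by blast
  obtain C1 L1 where C1: "finite C1" "C1 \<subseteq> \<theta>" "\<forall>y'\<in>P. (\<forall>t\<in>C1. \<forall>q<L1. y' t q = x t q) \<longrightarrow> \<Phi> y' k = \<Phi> x k"
    using cont_bit_cyl[OF Pc xP, where k=k] by blast
  obtain C2 L2 where C2: "finite C2" "C2 \<subseteq> \<theta>" "\<forall>y'\<in>P. (\<forall>t\<in>C2. \<forall>q<L2. y' t q = y t q) \<longrightarrow> H y' i k = H y i k"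
    using cont_bit_cyl[OF h_cont[OF i] yP, where k=k] by blast
  define C where "C = C1 \<union> C2"
  define L where "L = L1 + L2"
  have C: "finite C" "C \<subseteq> \<theta>" using C1 C2 by (auto simp: C_def)
  define ex where "ex z t = (if t \<in> C then (if agree R z z0 t then map (x t) [length (W z t)..<L]
       else if agree R z w0 t then map (y t) [length (W z t)..<L] else replicate (L - length (W z t)) 0) else [])"
    for z t
  define W' where "W' z t = W z t @ ex z t" for z t
  have len_ex: "length (ex z t) = (if t \<in> C then L - length (W z t) else 0)" for z t
    by (simp add: ex_def)
  have inv': "Inv \<theta> R W'"
  proof -
    have R: "finite R \<and> (\<forall>e\<in>R. fst e \<in> \<theta>)" using Inv_R[OF inv] .
    have dep: "\<forall>z\<in>P. \<forall>w\<in>P. \<forall>t. agree R z w t \<longrightarrow> W' z t = W' w t"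
    proof (intro ballI allI impI)
      fix z w t assume z: "z \<in> P" and w: "w \<in> P" and a: "agree R z w t"
      have e1: "W z t = W w t" using Inv_dep[OF inv z w a] .
      have e2: "agree R z z0 t = agree R w z0 t" using a agree_sym agree_trans by metis
      have e3: "agree R z w0 t = agree R w w0 t" using a agree_sym agree_trans by metis
      show "W' z t = W' w t" unfolding W'_def ex_def using e1 e2 e3 by simp
    qed
    have len: "\<forall>z\<in>P. \<forall>w\<in>P. \<forall>t. length (W' z t) = length (W' w t)"
    proof (intro ballI allI)
      fix z w t assume z: "z \<in> P" and w: "w \<in> P"
      have "length (W z t) = length (W w t)" using Inv_len[OF inv z w] .
      then show "length (W' z t) = length (W' w t)" unfolding W'_def length_append len_ex by simp
    qed
    have supp: "\<exists>C'. finite C' \<and> C' \<subseteq> \<theta> \<and> (\<forall>z\<in>P. \<forall>t. t \<notin> C' \<longrightarrow> W' z t = [])"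
    proof -
      obtain C0 where C0: "finite C0" "C0 \<subseteq> \<theta>" "\<forall>z\<in>P. \<forall>t. t \<notin> C0 \<longrightarrow> W z t = []"
        using Inv_supp[OF inv] by blast
      have "\<forall>z\<in>P. \<forall>t. t \<notin> C0 \<union> C \<longrightarrow> W' z t = []"
        using C0(3) unfolding W'_def ex_def by simp
      then show ?thesis using C0 C by (intro exI[of _ "C0 \<union> C"]) auto
    qed
    have bits: "\<forall>z\<in>P. \<forall>t. set (W' z t) \<subseteq> {0,1}"
    proof (intro ballI allI)
      fix z t assume z: "z \<in> P"
      have "set (ex z t) \<subseteq> {0,1}"
      proof (cases "t \<in> C")
        case True
        then have t: "t \<in> \<theta>" using C by blast
        have xb: "\<forall>q. x t q \<in> {0,1}" and yb: "\<forall>q. y t q \<in> {0,1}" using xP yP t by (auto simp: inP_iff)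
        have sx: "set (map (x t) l) \<subseteq> {0,1}" for l using xb by (simp add: image_subset_iff)
        have sy: "set (map (y t) l) \<subseteq> {0,1}" for l using yb by (simp add: image_subset_iff)
        have sr: "set (replicate n (0::nat)) \<subseteq> {0,1}" for n by auto
        show ?thesis unfolding ex_def using True sx sy sr by presburger
      qed (simp add: ex_def)
      then show "set (W' z t) \<subseteq> {0,1}" unfolding W'_def using Inv_bits[OF inv z, of t] by simp
    qed
    have pos: "\<forall>e\<in>R. \<exists>p. \<forall>z\<in>P. p < length (W' z (fst e)) \<and> W' z (fst e) ! p = z (fst e) (snd e)"
    proof
      fix e assume e: "e \<in> R"
      obtain p where p: "\<forall>z\<in>P. p < length (W z (fst e)) \<and> W z (fst e) ! p = z (fst e) (snd e)"
        using Inv_pos[OF inv e] by blast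
      have "\<forall>z\<in>P. p < length (W' z (fst e)) \<and> W' z (fst e) ! p = z (fst e) (snd e)"
      proof
        fix z assume z: "z \<in> P"
        then have "p < length (W z (fst e))" "W z (fst e) ! p = z (fst e) (snd e)" using p by blast+
        then show "p < length (W' z (fst e)) \<and> W' z (fst e) ! p = z (fst e) (snd e)"
          unfolding W'_def by (simp add: nth_append)
      qed
      then show "\<exists>p. \<forall>z\<in>P. p < length (W' z (fst e)) \<and> W' z (fst e) ! p = z (fst e) (snd e)" by blast
    qed
    show ?thesis by (rule InvI[OF conjunct1[OF R] conjunct2[OF R] dep len supp bits pos])
  qed
  have ext': "Ext \<theta> W W'" unfolding Ext_def W'_def by blast
  have cl1: "\<forall>t\<in>C. \<forall>q<L. x' t q = x t q" if x': "x' \<in> Box \<theta> W' z0" for x'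
  proof (intro ballI allI impI)
    fix t q assume t: "t \<in> C" and q: "q < L"
    show "x' t q = x t q"
    proof (cases "q < length (W z0 t)")
      case True
      have "x' t q = W' z0 t ! q" using x' True by (auto simp: Box_def W'_def)
      also have "\<dots> = W z0 t ! q" unfolding W'_def using True by (rule nth_app_lt)
      also have "\<dots> = x t q" using xy(1) True by (simp add: Box_def)
      finally show ?thesis .
    next
      case False
      have l: "length (W' z0 t) = L" using t False q len_ex[of z0 t] unfolding W'_def by simp
      have "x' t q = W' z0 t ! q" using x' q l by (simp add: Box_def)
      also have "\<dots> = x t q" unfolding W'_def ex_def using t agree_refl False q
        by (simp add: nth_app_map)
      finally show ?thesis .
    qed
  qed
  have cl2: "\<forall>t\<in>C. \<forall>q<L. y' t q = y t q" if y': "y' \<in> Box \<theta> W' w0" for y'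
  proof (intro ballI allI impI)
    fix t q assume t: "t \<in> C" and q: "q < L"
    show "y' t q = y t q"
    proof (cases "q < length (W w0 t)")
      case True
      have "y' t q = W' w0 t ! q" using y' True by (auto simp: Box_def W'_def)
      also have "\<dots> = W w0 t ! q" unfolding W'_def using True by (rule nth_app_lt)
      also have "\<dots> = y t q" using xy(2) True by (simp add: Box_def)
      finally show ?thesis .
    next
      case False
      have l: "length (W' w0 t) = L" using t False q len_ex[of w0 t] unfolding W'_def by simp
      have "y' t q = W' w0 t ! q" using y' q l by (simp add: Box_def)
      also have "\<dots> = y t q"
      proof (cases "agree R w0 z0 t")
        case True
        then have "t \<in> S" unfolding S_def using agree_sym by blast
        then have "x t = y t" using xy(3) by blast
        then show ?thesis unfolding W'_def ex_def using t True False q by (simp add: nth_app_map)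
      next
        case False2: False
        then show ?thesis unfolding W'_def ex_def using t agree_refl False q by (simp add: nth_app_map)
      qed
      finally show ?thesis .
    qed
  qed
  have sep: "\<forall>x'\<in>Box \<theta> W' z0. \<forall>y'\<in>Box \<theta> W' w0. \<Phi> x' \<noteq> H y' i"
  proof (intro ballI)
    fix x' y' assume x': "x' \<in> Box \<theta> W' z0" and y': "y' \<in> Box \<theta> W' w0"
    have x'P: "x' \<in> P" and y'P: "y' \<in> P" using x' y' Box_sub by blast+
    have "\<forall>t\<in>C1. \<forall>q<L1. x' t q = x t q" using cl1[OF x'] unfolding C_def L_def by auto
    then have a: "\<Phi> x' k = \<Phi> x k" using C1(3) x'P by blast
    have "\<forall>t\<in>C2. \<forall>q<L2. y' t q = y t q" using cl2[OF y'] unfolding C_def L_def by auto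
    then have b: "H y' i k = H y i k" using C2(3) y'P by blast
    show "\<Phi> x' \<noteq> H y' i"
    proof
      assume "\<Phi> x' = H y' i"
      then have "\<Phi> x' k = H y' i k" by simp
      then show False using a b k by simp
    qed
  qed
  show ?thesis using inv' ext' sep by blast
qed

end

definition b0 :: "ord1 list set \<Rightarrow> pt" where
  "b0 \<theta> = (\<lambda>t. if t \<in> \<theta> then (\<lambda>_. 0) else undefined)"

lemma b0_P: "b0 \<theta> \<in> topspace (Dpow \<theta>)"
  unfolding inP_iff b0_def by simp

context ips begin

lemma sep_iter:
  assumes inv: "Inv \<theta> R W" and F: "finite F" "F \<subseteq> P \<times> P"
    and Pc: "continuous_map (Dpow \<theta>) euclidean \<Phi>" and i: "i \<in> \<theta>"
    and nd: "\<And>Op. openin (Dpow \<theta>) Op \<Longrightarrow> Op \<noteq> {} \<Longrightarrow> \<exists>x\<in>Op. \<Phi> x \<noteq> H x i"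
  shows "\<exists>W'. Inv \<theta> R W' \<and> Ext \<theta> W W' \<and> (\<forall>zw\<in>F. \<forall>x\<in>Box \<theta> W' (fst zw). \<forall>y\<in>Box \<theta> W' (snd zw). \<Phi> x \<noteq> H y i)"
  using F
proof (induction F rule: finite_induct)
  case empty
  then show ?case using inv Ext_refl by blast
next
  case (insert zw F)
  obtain W1 where W1: "Inv \<theta> R W1" "Ext \<theta> W W1" "\<forall>zw\<in>F. \<forall>x\<in>Box \<theta> W1 (fst zw). \<forall>y\<in>Box \<theta> W1 (snd zw). \<Phi> x \<noteq> H y i"
    using insert by blast
  have z: "fst zw \<in> P" and w: "snd zw \<in> P" using insert.prems by auto
  obtain W2 where W2: "Inv \<theta> R W2" "Ext \<theta> W1 W2" "\<forall>x\<in>Box \<theta> W2 (fst zw). \<forall>y\<in>Box \<theta> W2 (snd zw). \<Phi> x \<noteq> H y i"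
    using sep_pair[OF W1(1) z w Pc i nd] by blast
  have "\<forall>zw'\<in>insert zw F. \<forall>x\<in>Box \<theta> W2 (fst zw'). \<forall>y\<in>Box \<theta> W2 (snd zw'). \<Phi> x \<noteq> H y i"
  proof
    fix zw' assume zw': "zw' \<in> insert zw F"
    show "\<forall>x\<in>Box \<theta> W2 (fst zw'). \<forall>y\<in>Box \<theta> W2 (snd zw'). \<Phi> x \<noteq> H y i"
    proof (cases "zw' = zw")
      case True then show ?thesis using W2(3) by simp
    next
      case False
      then have zw'F: "zw' \<in> F" using zw' by blast
      have z': "fst zw' \<in> P" and w': "snd zw' \<in> P" using insert.prems zw' by auto
      have "Box \<theta> W2 (fst zw') \<subseteq> Box \<theta> W1 (fst zw')" "Box \<theta> W2 (snd zw') \<subseteq> Box \<theta> W1 (snd zw')"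
        using Box_mono[OF W2(2) z'] Box_mono[OF W2(2) w'] .
      then show ?thesis using W1(3) zw'F by blast
    qed
  qed
  then show ?case using W2(1) Ext_trans[OF W1(2) W2(2)] by blast
qed

lemma sep_all:
  assumes inv: "Inv \<theta> R W"
    and Pc: "continuous_map (Dpow \<theta>) euclidean \<Phi>" and i: "i \<in> \<theta>"
    and nd: "\<And>Op. openin (Dpow \<theta>) Op \<Longrightarrow> Op \<noteq> {} \<Longrightarrow> \<exists>x\<in>Op. \<Phi> x \<noteq> H x i"
  shows "\<exists>W'. Inv \<theta> R W' \<and> Ext \<theta> W W' \<and> (\<forall>z\<in>P. \<forall>w\<in>P. \<forall>x\<in>Box \<theta> W' z. \<forall>y\<in>Box \<theta> W' w. \<Phi> x \<noteq> H y i)"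
proof -
  have R: "finite R" "\<forall>e\<in>R. fst e \<in> \<theta>" using Inv_R[OF inv] by auto
  define g where "g f = (\<lambda>t. if t \<in> \<theta> then (\<lambda>m. if (t, m) \<in> R then f (t, m) else 0) else undefined)"
    for f :: "ord1 list \<times> nat \<Rightarrow> nat"
  define rep where "rep z = g (restrict (\<lambda>e. z (fst e) (snd e)) R)" for z :: pt
  have repP: "rep z \<in> P" if z: "z \<in> P" for z
    using z[unfolded inP_iff] unfolding inP_iff rep_def g_def by auto
  have repA: "agree R z (rep z) t" if z: "z \<in> P" for z t
    unfolding agree_def
  proof (intro ballI allI impI)
    fix t' m assume "t' \<in> down t" "(t', m) \<in> R"
    moreover then have "t' \<in> \<theta>" using R(2) by fastforce
    ultimately show "z t' m = rep z t' m" by (simp add: rep_def g_def)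
  qed
  have fin: "finite (rep ` P)"
  proof -
    have "rep ` P \<subseteq> g ` (Pi\<^sub>E R (\<lambda>_. {0,1}))"
    proof
      fix r assume "r \<in> rep ` P"
      then obtain z where z: "z \<in> P" "r = rep z" by blast
      have "restrict (\<lambda>e. z (fst e) (snd e)) R \<in> Pi\<^sub>E R (\<lambda>_. {0,1})"
      proof (unfold PiE_iff, intro conjI ballI)
        fix e assume "e \<in> R"
        then have "fst e \<in> \<theta>" using R(2) by blast
        then show "restrict (\<lambda>e. z (fst e) (snd e)) R e \<in> {0,1}" using z(1) \<open>e \<in> R\<close> by (simp add: inP_iff)
      qed simp
      then show "r \<in> g ` (Pi\<^sub>E R (\<lambda>_. {0,1}))" using z(2) unfolding rep_def by blast
    qed
    moreover have "finite (g ` (Pi\<^sub>E R (\<lambda>_. {0::nat,1})))" using R(1) by (intro finite_imageI finite_PiE) auto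
    ultimately show ?thesis by (rule finite_subset)
  qed
  obtain W' where W': "Inv \<theta> R W'" "Ext \<theta> W W'"
      "\<forall>zw\<in>rep ` P \<times> rep ` P. \<forall>x\<in>Box \<theta> W' (fst zw). \<forall>y\<in>Box \<theta> W' (snd zw). \<Phi> x \<noteq> H y i"
  proof -
    have "rep ` P \<times> rep ` P \<subseteq> P \<times> P" using repP by blast
    then show ?thesis using sep_iter[OF inv _ _ Pc i nd, of "rep ` P \<times> rep ` P"] fin that by blast
  qed
  have "\<forall>z\<in>P. \<forall>w\<in>P. \<forall>x\<in>Box \<theta> W' z. \<forall>y\<in>Box \<theta> W' w. \<Phi> x \<noteq> H y i"
  proof (intro ballI)
    fix z w x y assume z: "z \<in> P" and w: "w \<in> P" and x: "x \<in> Box \<theta> W' z" and y: "y \<in> Box \<theta> W' w"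
    have "Box \<theta> W' z = Box \<theta> W' (rep z)" using Box_dep[OF W'(1) z repP[OF z] repA[OF z]] .
    moreover have "Box \<theta> W' w = Box \<theta> W' (rep w)" using Box_dep[OF W'(1) w repP[OF w] repA[OF w]] .
    moreover have "(rep z, rep w) \<in> rep ` P \<times> rep ` P" using z w by blast
    ultimately show "\<Phi> x \<noteq> H y i" using W'(3) x y by fastforce
  qed
  then show ?thesis using W' by blast
qed

lemma reveal:
  assumes inv: "Inv \<theta> R W" and T: "finite T" "T \<subseteq> \<theta>" and Rn: "R \<subseteq> UNIV \<times> {..<n}"
  shows "\<exists>W'. Inv \<theta> (R \<union> T \<times> {..n}) W' \<and> Ext \<theta> W W' \<and> (\<forall>z\<in>P. \<forall>t\<in>T. length (W z t) < length (W' z t))"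
proof -
  define R' where "R' = R \<union> T \<times> {..n}"
  define Ls where "Ls t = filter (\<lambda>m. (t, m) \<notin> R) [0..<Suc n]" for t
  define W' where "W' z t = W z t @ (if t \<in> T then map (z t) (Ls t) else [])" for z t
  have RR: "finite R" "\<forall>e\<in>R. fst e \<in> \<theta>" using Inv_R[OF inv] by auto
  have i1: "finite R'" unfolding R'_def using RR(1) T(1) by auto
  have i2: "\<forall>e\<in>R'. fst e \<in> \<theta>" unfolding R'_def using RR(2) T(2) by auto
  have i3: "\<forall>z\<in>P. \<forall>w\<in>P. \<forall>t. agree R' z w t \<longrightarrow> W' z t = W' w t"
  proof (intro ballI allI impI)
    fix z w t assume z: "z \<in> P" and w: "w \<in> P" and a: "agree R' z w t"
    have "agree R z w t" using agree_mono[OF a] R'_def by blast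
    then have e1: "W z t = W w t" using Inv_dep[OF inv z w] by blast
    have e2: "map (z t) (Ls t) = map (w t) (Ls t)" if t: "t \<in> T"
    proof (rule map_cong[OF refl])
      fix m assume "m \<in> set (Ls t)"
      then have "m \<le> n" by (auto simp: Ls_def simp del: upt_Suc)
      then have "(t, m) \<in> R'" using t by (auto simp: R'_def)
      moreover have "t \<in> down t" using t T(2) Xi_nonempty_elem[OF th] down_self by blast
      ultimately show "z t m = w t m" using a by (auto simp: agree_def)
    qed
    show "W' z t = W' w t" unfolding W'_def using e1 e2 by simp
  qed
  have i4: "\<forall>z\<in>P. \<forall>w\<in>P. \<forall>t. length (W' z t) = length (W' w t)"
  proof (intro ballI allI)
    fix z w t assume z: "z \<in> P" and w: "w \<in> P"
    have "length (W z t) = length (W w t)" using Inv_len[OF inv z w] .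
    then show "length (W' z t) = length (W' w t)" unfolding W'_def by simp
  qed
  have i5: "\<exists>C. finite C \<and> C \<subseteq> \<theta> \<and> (\<forall>z\<in>P. \<forall>t. t \<notin> C \<longrightarrow> W' z t = [])"
  proof -
    obtain C0 where C0: "finite C0" "C0 \<subseteq> \<theta>" "\<forall>z\<in>P. \<forall>t. t \<notin> C0 \<longrightarrow> W z t = []"
      using Inv_supp[OF inv] by blast
    have "\<forall>z\<in>P. \<forall>t. t \<notin> C0 \<union> T \<longrightarrow> W' z t = []" using C0(3) unfolding W'_def by simp
    then show ?thesis using C0 T by (intro exI[of _ "C0 \<union> T"]) auto
  qed
  have i6: "\<forall>z\<in>P. \<forall>t. set (W' z t) \<subseteq> {0,1}"
  proof (intro ballI allI)
    fix z t assume z: "z \<in> P"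
    have "set (if t \<in> T then map (z t) (Ls t) else []) \<subseteq> {0,1}"
    proof (cases "t \<in> T")
      case True
      then have "t \<in> \<theta>" using T by blast
      then have "\<forall>q. z t q \<in> {0,1}" using z by (simp add: inP_iff)
      then show ?thesis using True by (simp add: image_subset_iff)
    qed simp
    then show "set (W' z t) \<subseteq> {0,1}" unfolding W'_def using Inv_bits[OF inv z, of t] by simp
  qed
  have i7: "\<forall>e\<in>R'. \<exists>p. \<forall>z\<in>P. p < length (W' z (fst e)) \<and> W' z (fst e) ! p = z (fst e) (snd e)"
  proof
    fix e assume e: "e \<in> R'"
    show "\<exists>p. \<forall>z\<in>P. p < length (W' z (fst e)) \<and> W' z (fst e) ! p = z (fst e) (snd e)"
    proof (cases "e \<in> R")
      case True
      obtain p where p: "\<forall>z\<in>P. p < length (W z (fst e)) \<and> W z (fst e) ! p = z (fst e) (snd e)"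
        using Inv_pos[OF inv True] by blast
      have "\<forall>z\<in>P. p < length (W' z (fst e)) \<and> W' z (fst e) ! p = z (fst e) (snd e)"
      proof
        fix z assume z: "z \<in> P"
        then have "p < length (W z (fst e))" "W z (fst e) ! p = z (fst e) (snd e)" using p by blast+
        then show "p < length (W' z (fst e)) \<and> W' z (fst e) ! p = z (fst e) (snd e)"
          unfolding W'_def by (simp add: nth_append)
      qed
      then show ?thesis by blast
    next
      case False
      then obtain t m where tm: "e = (t, m)" "t \<in> T" "m \<le> n" "(t, m) \<notin> R" using e unfolding R'_def by auto
      then have "m \<in> set (Ls t)" by (auto simp: Ls_def simp del: upt_Suc)
      then obtain j where j: "j < length (Ls t)" "Ls t ! j = m" by (auto simp: in_set_conv_nth)
      define p where "p = length (W (b0 \<theta>) t) + j"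
      have "\<forall>z\<in>P. p < length (W' z t) \<and> W' z t ! p = z t m"
      proof
        fix z assume z: "z \<in> P"
        have l: "length (W z t) = length (W (b0 \<theta>) t)" using Inv_len[OF inv z b0_P] .
        show "p < length (W' z t) \<and> W' z t ! p = z t m"
          unfolding W'_def p_def using tm(2) j l by (simp add: nth_append)
      qed
      then show ?thesis using tm(1) by auto
    qed
  qed
  have inv': "Inv \<theta> R' W'" by (rule InvI[OF i1 i2 i3 i4 i5 i6 i7])
  have ext: "Ext \<theta> W W'" unfolding Ext_def W'_def by blast
  have gr: "\<forall>z\<in>P. \<forall>t\<in>T. length (W z t) < length (W' z t)"
  proof (intro ballI)
    fix z t assume "t \<in> T"
    have "(t, n) \<notin> R" using Rn by auto
    then have "n \<in> set (Ls t)" by (simp add: Ls_def del: upt_Suc)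
    then have "Ls t \<noteq> []" by auto
    then show "length (W z t) < length (W' z t)" unfolding W'_def using \<open>t \<in> T\<close> by simp
  qed
  show ?thesis using inv' ext gr unfolding R'_def by blast
qed

end

lemma cont_into_Dpow:
  assumes "\<And>x. x \<in> topspace X \<Longrightarrow> f x \<in> extensional \<theta>"
    and "\<And>t. t \<in> \<theta> \<Longrightarrow> continuous_map X euclidean (\<lambda>x. f x t)"
    and "\<And>x t. x \<in> topspace X \<Longrightarrow> t \<in> \<theta> \<Longrightarrow> f x t \<in> Cantor"
  shows "continuous_map X (Dpow \<theta>) f"
  unfolding Dpow_def continuous_map_componentwise
proof (intro conjI ballI)
  show "f ` topspace X \<subseteq> extensional \<theta>" using assms(1) by blast
  fix t assume t: "t \<in> \<theta>"
  show "continuous_map X (subtopology euclidean Cantor) (\<lambda>x. f x t)"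
    unfolding continuous_map_in_subtopology using assms(2)[OF t] assms(3)[OF _ t] by blast
qed

context ips begin

definition Sep :: "(pt \<Rightarrow> nat \<Rightarrow> nat) \<Rightarrow> ord1 list \<Rightarrow> wst \<Rightarrow> bool" where
  "Sep \<Phi> i W \<longleftrightarrow> (\<forall>z\<in>P. \<forall>w\<in>P. \<forall>x\<in>Box \<theta> W z. \<forall>y\<in>Box \<theta> W w. \<Phi> x \<noteq> H y i)"

lemma Ext_D: "Ext \<theta> W W' \<Longrightarrow> z \<in> P \<Longrightarrow> \<exists>u. W' z t = W z t @ u"
  by (simp add: Ext_def)

lemma Ext_len: "Ext \<theta> W W' \<Longrightarrow> z \<in> P \<Longrightarrow> length (W z t) \<le> length (W' z t)"
proof -
  assume a: "Ext \<theta> W W'" "z \<in> P"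
  obtain u where "W' z t = W z t @ u" using Ext_D[OF a] by blast
  then show ?thesis by simp
qed

lemma Ext_nth: "Ext \<theta> W W' \<Longrightarrow> z \<in> P \<Longrightarrow> q < length (W z t) \<Longrightarrow> W' z t ! q = W z t ! q"
proof -
  assume a: "Ext \<theta> W W'" "z \<in> P" "q < length (W z t)"
  obtain u where "W' z t = W z t @ u" using Ext_D[OF a(1,2)] by blast
  then show ?thesis using a(3) by (simp add: nth_append)
qed

lemma Sep_mono: "Sep \<Phi> i W \<Longrightarrow> Ext \<theta> W W' \<Longrightarrow> Sep \<Phi> i W'"
  unfolding Sep_def using Box_mono by blast

lemma main_constr_ne:
  assumes ne: "\<theta> \<noteq> {}" and inv0: "Inv \<theta> {} W0" and Pc: "continuous_map (Dpow \<theta>) euclidean \<Phi>" and A: "A \<subseteq> \<theta>"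
    and nd: "\<And>i Op. i \<in> A \<Longrightarrow> openin (Dpow \<theta>) Op \<Longrightarrow> Op \<noteq> {} \<Longrightarrow> \<exists>x\<in>Op. \<Phi> x \<noteq> H x i"
  shows "\<exists>K Ki. (\<forall>z\<in>P. K z \<in> P) \<and> continuous_map (Dpow \<theta>) (Dpow \<theta>) K \<and> continuous_map (Dpow \<theta>) (Dpow \<theta>) Ki \<and>
     (\<forall>z\<in>P. Ki (K z) = z) \<and>
     (\<forall>\<xi>. \<xi> \<in> Xi \<longrightarrow> \<xi> \<subseteq> \<theta> \<longrightarrow> (\<forall>z\<in>P. \<forall>w\<in>P. restrict z \<xi> = restrict w \<xi> \<longleftrightarrow> restrict (K z) \<xi> = restrict (K w) \<xi>)) \<and>
     (\<forall>z\<in>P. K z \<in> Box \<theta> W0 z) \<and> (\<forall>i\<in>A. \<forall>z\<in>P. \<forall>w\<in>P. \<Phi> (K z) \<noteq> H (K w) i)"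
proof -
  have cth: "countable \<theta>" using th by (simp add: Xi_def)
  define e where "e = from_nat_into \<theta>"
  have e_range: "range e = \<theta>" unfolding e_def using ne cth by simp
  have e_in: "e n \<in> \<theta>" for n using e_range by blast
  define En where "En n = e ` {..<n} \<times> {..<n}" for n
  define Pst where "Pst n st \<longleftrightarrow> fst st = En n \<and> Inv \<theta> (fst st) (snd st) \<and> Ext \<theta> W0 (snd st)" for n and st :: "(ord1 list \<times> nat) set \<times> wst"
  define Qst where "Qst n st st' \<longleftrightarrow> Ext \<theta> (snd st) (snd st') \<and> (e n \<in> A \<longrightarrow> Sep \<Phi> (e n) (snd st')) \<and>
      (\<forall>z\<in>P. \<forall>t\<in>e ` {..n}. length (snd st z t) < length (snd st' z t))"
    for n and st st' :: "(ord1 list \<times> nat) set \<times> wst"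
  have init: "\<exists>st. Pst 0 st"
    unfolding Pst_def En_def using inv0 Ext_refl by (intro exI[of _ "({}, W0)"]) auto
  have step: "\<exists>st'. Pst (Suc n) st' \<and> Qst n st st'" if "Pst n st" for n st
  proof -
    obtain R W where st: "st = (R, W)" by fastforce
    have R: "R = En n" and inv: "Inv \<theta> R W" and e0: "Ext \<theta> W0 W" using that st by (auto simp: Pst_def)
    obtain W1 where W1: "Inv \<theta> R W1" "Ext \<theta> W W1" "e n \<in> A \<longrightarrow> Sep \<Phi> (e n) W1"
    proof (cases "e n \<in> A")
      case True
      obtain W1 where "Inv \<theta> R W1" "Ext \<theta> W W1" "\<forall>z\<in>P. \<forall>w\<in>P. \<forall>x\<in>Box \<theta> W1 z. \<forall>y\<in>Box \<theta> W1 w. \<Phi> x \<noteq> H y (e n)"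
        using sep_all[OF inv Pc e_in nd[OF True]] by blast
      then show ?thesis using that by (simp add: Sep_def)
    next
      case False
      then show ?thesis using that[OF inv Ext_refl] by simp
    qed
    have Rn: "R \<subseteq> UNIV \<times> {..<n}" using R by (auto simp: En_def)
    have T: "finite (e ` {..n})" "e ` {..n} \<subseteq> \<theta>" using e_in by auto
    obtain W2 where W2: "Inv \<theta> (R \<union> e ` {..n} \<times> {..n}) W2" "Ext \<theta> W1 W2"
        "\<forall>z\<in>P. \<forall>t\<in>e ` {..n}. length (W1 z t) < length (W2 z t)"
      using reveal[OF W1(1) T Rn] by blast
    have sub: "e ` {..<n} \<times> {..<n} \<subseteq> e ` {..n} \<times> {..n}" by (intro Sigma_mono image_mono) auto
    have RR: "R \<union> e ` {..n} \<times> {..n} = En (Suc n)" unfolding R En_def lessThan_Suc_atMost using Un_absorb1[OF sub] by simp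
    have le: "length (W z t) \<le> length (W1 z t)" if "z \<in> P" for z t
      using Ext_len[OF W1(2) that] .
    have "Pst (Suc n) (En (Suc n), W2)"
      unfolding Pst_def using W2(1) RR Ext_trans[OF Ext_trans[OF e0 W1(2)] W2(2)] by simp
    moreover have "Qst n st (En (Suc n), W2)"
    proof -
      have a: "Ext \<theta> W W2" using Ext_trans[OF W1(2) W2(2)] .
      have b: "e n \<in> A \<longrightarrow> Sep \<Phi> (e n) W2" using Sep_mono[OF _ W2(2)] W1(3) by blast
      have c: "\<forall>z\<in>P. \<forall>t\<in>e ` {..n}. length (W z t) < length (W2 z t)"
      proof (intro ballI)
        fix z t assume "z \<in> P" "t \<in> e ` {..n}"
        then show "length (W z t) < length (W2 z t)" using le[of z t] W2(3) by (meson le_less_trans)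
      qed
      show ?thesis unfolding Qst_def st using a b c by simp
    qed
    ultimately show ?thesis by blast
  qed
  obtain f where f: "\<forall>n. Pst n (f n) \<and> Qst n (f n) (f (Suc n))"
    using dependent_nat_choice[of Pst Qst, OF init step] by blast
  define Ws where "Ws n = snd (f n)" for n
  have fP: "Pst n (f n)" and fQ: "Qst n (f n) (f (Suc n))" for n using f by blast+
  have inv: "Inv \<theta> (En n) (Ws n)" for n using fP[of n] unfolding Pst_def Ws_def by (elim conjE) simp
  have ext0: "Ext \<theta> W0 (Ws n)" for n using fP[of n] unfolding Pst_def Ws_def by (elim conjE) simp
  have ext1: "Ext \<theta> (Ws n) (Ws (Suc n))" for n using fQ[of n] unfolding Qst_def Ws_def by simp
  have sep: "e n \<in> A \<Longrightarrow> Sep \<Phi> (e n) (Ws (Suc n))" for n using fQ[of n] unfolding Qst_def Ws_def by simp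
  have grow: "\<forall>z\<in>P. \<forall>t\<in>e ` {..n}. length (Ws n z t) < length (Ws (Suc n) z t)" for n
    using fQ[of n] unfolding Qst_def Ws_def by simp
  have extd: "Ext \<theta> (Ws m) (Ws (m + d))" for m d
  proof (induction d)
    case 0 then show ?case using Ext_refl[of \<theta> "Ws m"] by (simp only: add_0_right)
  next
    case (Suc d)
    have "m + Suc d = Suc (m + d)" by simp
    then show ?case using Ext_trans[OF Suc ext1[of "m + d"]] by (simp only:)
  qed
  have extle: "Ext \<theta> (Ws m) (Ws n)" if mn: "m \<le> n" for m n
  proof -
    obtain d where "n = m + d" using le_Suc_ex[OF mn] by blast
    then show ?thesis using extd[of m d] by (simp only:)
  qed
  have stab: "Ws n z t ! q = Ws m z t ! q" if zP: "z \<in> P" and mn: "m \<le> n" and qm: "q < length (Ws m z t)" for z t q m n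
  proof -
    have ee: "Ext \<theta> (Ws m) (Ws n)" by (rule extle[OF mn])
    show ?thesis by (rule Ext_nth[where W="Ws m" and W'="Ws n" and z=z and t=t and q=q, OF ee zP qm])
  qed
  have lgrow: "d \<le> length (Ws (k + d) z (e k))" if z: "z \<in> P" for k d z
  proof (induction d)
    case 0 then show ?case by simp
  next
    case (Suc d)
    have ek: "e k \<in> e ` {..k + d}" by auto
    have g: "length (Ws (k + d) z (e k)) < length (Ws (Suc (k + d)) z (e k))"
      using bspec[OF bspec[OF grow[of "k + d"] z] ek] .
    have "k + Suc d = Suc (k + d)" by simp
    then show ?case using Suc g by (simp only:)
  qed
  define kk where "kk t = (SOME k. e k = t)" for t
  have kk: "e (kk t) = t" if "t \<in> \<theta>" for t
  proof -
    have "\<exists>k. e k = t" using that e_range by blast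
    then show ?thesis unfolding kk_def by (rule someI_ex)
  qed
  define N where "N t q = kk t + Suc q" for t q
  have qN: "q < length (Ws (N t q) z t)" if "z \<in> P" "t \<in> \<theta>" for z t q
    using lgrow[OF that(1), where k="kk t" and d="Suc q"] kk[OF that(2)] unfolding N_def by simp
  define K where "K z = (\<lambda>t. if t \<in> \<theta> then (\<lambda>q. Ws (N t q) z t ! q) else undefined)" for z
  have supp: "Ws n z t = []" if "z \<in> P" "t \<notin> \<theta>" for n z t
  proof -
    obtain C where "finite C" "C \<subseteq> \<theta>" "\<forall>z\<in>P. \<forall>t. t \<notin> C \<longrightarrow> Ws n z t = []" using Inv_supp[OF inv[of n]] by blast
    then show ?thesis using that by blast
  qed
  have Kbox: "K z \<in> Box \<theta> (Ws n) z" if z: "z \<in> P" for z n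
  proof -
    have KP: "K z \<in> P" unfolding inP_iff
    proof (intro conjI ballI allI impI)
      fix t q assume t: "t \<in> \<theta>"
      have "Ws (N t q) z t ! q \<in> set (Ws (N t q) z t)" using qN[OF z t] by simp
      then show "K z t q \<in> {0,1}" using Inv_bits[OF inv z] t unfolding K_def by auto
    next
      fix t assume "t \<notin> \<theta>" then show "K z t = undefined" by (simp add: K_def)
    qed
    show ?thesis unfolding Box_def
    proof (intro CollectI conjI allI impI KP)
      fix t q assume q: "q < length (Ws n z t)"
      then have t: "t \<in> \<theta>" using supp[OF z] by fastforce
      show "K z t q = Ws n z t ! q"
      proof (cases "N t q \<le> n")
        case True
        then show ?thesis using stab[OF z True qN[OF z t]] t by (simp add: K_def)
      next
        case False
        then show ?thesis using stab[OF z _ q, of "N t q"] t by (simp add: K_def)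
      qed
    qed
  qed
  have KP: "K z \<in> P" if "z \<in> P" for z using Kbox[OF that, of 0] Box_sub by blast
  have KW0: "K z \<in> Box \<theta> W0 z" if "z \<in> P" for z using Kbox[OF that, of 0] Box_mono[OF ext0 that] by blast
  have Ksep: "\<Phi> (K z) \<noteq> H (K w) i" if i: "i \<in> A" and z: "z \<in> P" and w: "w \<in> P" for i z w
  proof -
    obtain n where n: "e n = i" using i A e_range by blast
    have "Sep \<Phi> i (Ws (Suc n))" using sep[of n] n i by simp
    then show ?thesis using Kbox[OF z] Kbox[OF w] z w unfolding Sep_def by blast
  qed
  have pos: "\<exists>p. \<forall>z\<in>P. K z t p = z t m" if t: "t \<in> \<theta>" for t m
  proof -
    define n where "n = Suc (kk t + m)"
    have "kk t \<in> {..<n}" "m \<in> {..<n}" unfolding n_def by auto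
    then have "(t, m) \<in> En n" unfolding En_def using kk[OF t] by force
    then obtain p where p: "\<forall>z\<in>P. p < length (Ws n z t) \<and> Ws n z t ! p = z t m"
      using Inv_pos[OF inv[of n]] by fastforce
    have "\<forall>z\<in>P. K z t p = z t m"
    proof
      fix z assume z: "z \<in> P"
      have "K z t p = Ws n z t ! p" using Kbox[OF z, of n] p z by (simp add: Box_def)
      then show "K z t p = z t m" using p z by simp
    qed
    then show ?thesis by blast
  qed
  define ps where "ps t m = (SOME p. \<forall>z\<in>P. K z t p = z t m)" for t m
  have ps: "K z t (ps t m) = z t m" if "t \<in> \<theta>" "z \<in> P" for t m z
    using someI_ex[OF pos[OF that(1), of m]] that(2) unfolding ps_def by blast
  define Ki where "Ki y = (\<lambda>t. if t \<in> \<theta> then (\<lambda>m. y t (ps t m)) else undefined)" for y :: pt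
  have KiK: "Ki (K z) = z" if z: "z \<in> P" for z
  proof (rule ext)
    fix t show "Ki (K z) t = z t"
    proof (cases "t \<in> \<theta>")
      case True then show ?thesis using ps[OF True z] by (simp add: Ki_def)
    next
      case False then show ?thesis using z by (simp add: Ki_def inP_iff)
    qed
  qed
  have Kic: "continuous_map (Dpow \<theta>) (Dpow \<theta>) Ki"
  proof (rule cont_into_Dpow)
    show "Ki x \<in> extensional \<theta>" for x by (auto simp: Ki_def extensional_def)
    fix t assume t: "t \<in> \<theta>"
    show "continuous_map (Dpow \<theta>) euclidean (\<lambda>x. Ki x t)"
      unfolding euclidean_product_topology[symmetric] continuous_map_componentwise_UNIV
      using cont_pt[OF t] t by (simp add: Ki_def)
  next
    fix x t assume "x \<in> P" "t \<in> \<theta>"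
    then show "Ki x t \<in> Cantor" by (auto simp: Ki_def Cantor_def inP_iff)
  qed
  have Kc: "continuous_map (Dpow \<theta>) (Dpow \<theta>) K"
  proof (rule cont_into_Dpow)
    show "K x \<in> extensional \<theta>" for x by (auto simp: K_def extensional_def)
    fix t assume t: "t \<in> \<theta>"
    have cq: "continuous_map (Dpow \<theta>) euclidean (\<lambda>x. K x t q)" for q
    proof (rule loc_const_cont)
      fix z assume z: "z \<in> P"
      define U where "U = {y \<in> P. \<forall>e\<in>En (N t q). y (fst e) (snd e) = z (fst e) (snd e)}"
      have fin: "finite (En (N t q))" by (simp add: En_def)
      have "openin (Dpow \<theta>) U" unfolding U_def by (rule openin_cyl[OF fin])
      moreover have "z \<in> U" using z by (simp add: U_def)
      moreover have "\<forall>y\<in>U. K y t q = K z t q"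
      proof
        fix y assume y: "y \<in> U"
        then have yP: "y \<in> P" by (simp add: U_def)
        have "agree (En (N t q)) y z t" using y unfolding U_def agree_def by fastforce
        then have "Ws (N t q) y t = Ws (N t q) z t" using Inv_dep[OF inv yP z] by blast
        then show "K y t q = K z t q" using t by (simp add: K_def)
      qed
      ultimately show "\<exists>U. openin (Dpow \<theta>) U \<and> z \<in> U \<and> (\<forall>y\<in>U. K y t q = K z t q)" by blast
    qed
    show "continuous_map (Dpow \<theta>) euclidean (\<lambda>x. K x t)"
      unfolding euclidean_product_topology[symmetric] continuous_map_componentwise_UNIV
      using cq by simp
  next
    fix x t assume "x \<in> P" "t \<in> \<theta>"
    then show "K x t \<in> Cantor" using KP by (auto simp: inP_iff Cantor_def)
  qed
  have Kres: "restrict z \<xi> = restrict w \<xi> \<longleftrightarrow> restrict (K z) \<xi> = restrict (K w) \<xi>"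
    if xi: "\<xi> \<in> Xi" "\<xi> \<subseteq> \<theta>" and z: "z \<in> P" and w: "w \<in> P" for \<xi> z w
  proof
    assume r: "restrict z \<xi> = restrict w \<xi>"
    show "restrict (K z) \<xi> = restrict (K w) \<xi>"
    proof (rule ext)
      fix t show "restrict (K z) \<xi> t = restrict (K w) \<xi> t"
      proof (cases "t \<in> \<xi>")
        case True
        have ds: "down t \<subseteq> \<xi>" using down_sub[OF xi(1) True] .
        have "\<forall>s\<in>down t. z s = w s" using r ds by (metis restrict_apply' subsetD)
        then have ag: "agree R z w t" for R unfolding agree_def by simp
        have "K z t = K w t" unfolding K_def using Inv_dep[OF inv z w ag] by simp
        then show ?thesis by simp
      qed simp
    qed
  next
    assume r: "restrict (K z) \<xi> = restrict (K w) \<xi>"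
    show "restrict z \<xi> = restrict w \<xi>"
    proof (rule ext)
      fix t show "restrict z \<xi> t = restrict w \<xi> t"
      proof (cases "t \<in> \<xi>")
        case True
        have "K z t = K w t" using r True by (metis restrict_apply')
        then have "Ki (K z) t = Ki (K w) t" by (simp add: Ki_def)
        then show ?thesis using KiK[OF z] KiK[OF w] by simp
      qed simp
    qed
  qed
  have r1: "\<forall>z\<in>P. K z \<in> P" using KP by blast
  have r2: "\<forall>z\<in>P. Ki (K z) = z" using KiK by blast
  have r3: "\<forall>\<xi>. \<xi> \<in> Xi \<longrightarrow> \<xi> \<subseteq> \<theta> \<longrightarrow> (\<forall>z\<in>P. \<forall>w\<in>P. restrict z \<xi> = restrict w \<xi> \<longleftrightarrow> restrict (K z) \<xi> = restrict (K w) \<xi>)"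
    using Kres by blast
  have r4: "\<forall>z\<in>P. K z \<in> Box \<theta> W0 z" using KW0 by blast
  have r5: "\<forall>i\<in>A. \<forall>z\<in>P. \<forall>w\<in>P. \<Phi> (K z) \<noteq> H (K w) i" using Ksep by blast
  show ?thesis using r1 Kc Kic r2 r3 r4 r5 by (intro exI[of _ K] exI[of _ Ki] conjI)
qed

end

context ips begin

lemma main_constr:
  assumes inv0: "Inv \<theta> {} W0" and Pc: "continuous_map (Dpow \<theta>) euclidean \<Phi>" and A: "A \<subseteq> \<theta>"
    and nd: "\<And>i Op. i \<in> A \<Longrightarrow> openin (Dpow \<theta>) Op \<Longrightarrow> Op \<noteq> {} \<Longrightarrow> \<exists>x\<in>Op. \<Phi> x \<noteq> H x i"
  shows "\<exists>K Ki. (\<forall>z\<in>P. K z \<in> P) \<and> continuous_map (Dpow \<theta>) (Dpow \<theta>) K \<and> continuous_map (Dpow \<theta>) (Dpow \<theta>) Ki \<and>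
     (\<forall>z\<in>P. Ki (K z) = z) \<and>
     (\<forall>\<xi>. \<xi> \<in> Xi \<longrightarrow> \<xi> \<subseteq> \<theta> \<longrightarrow> (\<forall>z\<in>P. \<forall>w\<in>P. restrict z \<xi> = restrict w \<xi> \<longleftrightarrow> restrict (K z) \<xi> = restrict (K w) \<xi>)) \<and>
     (\<forall>z\<in>P. K z \<in> Box \<theta> W0 z) \<and> (\<forall>i\<in>A. \<forall>z\<in>P. \<forall>w\<in>P. \<Phi> (K z) \<noteq> H (K w) i)"
proof (cases "\<theta> = {}")
  case False
  show ?thesis by (rule main_constr_ne[OF False inv0 Pc A nd])
next
  case True
  obtain C where C: "finite C" "C \<subseteq> \<theta>" "\<forall>z\<in>P. \<forall>t. t \<notin> C \<longrightarrow> W0 z t = []"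
    using Inv_supp[OF inv0] by blast
  have box: "\<forall>z\<in>P. z \<in> Box \<theta> W0 z"
  proof
    fix z assume z: "z \<in> P"
    have "\<forall>t. W0 z t = []" using C True z by blast
    then show "z \<in> Box \<theta> W0 z" using z by (simp add: Box_def)
  qed
  have "\<forall>i\<in>A. \<forall>z\<in>P. \<forall>w\<in>P. \<Phi> (id z) \<noteq> H (id w) i" using A True by blast
  then show ?thesis using box
    by (intro exI[of _ id] conjI) (auto simp: continuous_map_id)
qed

lemma Y_IPS:
  assumes KP: "\<forall>z\<in>P. K z \<in> P" and Kc: "continuous_map (Dpow \<theta>) (Dpow \<theta>) K"
    and Kic: "continuous_map (Dpow \<theta>) (Dpow \<theta>) Ki" and KiK: "\<forall>z\<in>P. Ki (K z) = z"
    and Kres: "\<forall>\<xi>. \<xi> \<in> Xi \<longrightarrow> \<xi> \<subseteq> \<theta> \<longrightarrow> (\<forall>z\<in>P. \<forall>w\<in>P. restrict z \<xi> = restrict w \<xi> \<longleftrightarrow> restrict (K z) \<xi> = restrict (K w) \<xi>)"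
  shows "H ` K ` P \<in> IPS \<theta>" "H ` K ` P \<subseteq> X"
proof -
  define Y where "Y = H ` K ` P"
  have YX: "Y \<subseteq> X" and YP: "Y \<subseteq> P" using H_in KP unfolding Y_def by blast+
  have Hi_c: "continuous_map (subtopology (Dpow \<theta>) X) (Dpow \<theta>) Hi" using hm by (simp add: homeomorphic_maps_def)
  have HiH: "\<forall>x\<in>P. Hi (H x) = x" using hm by (simp add: homeomorphic_maps_def)
  have c1: "continuous_map (Dpow \<theta>) (subtopology (Dpow \<theta>) Y) (H \<circ> K)"
    unfolding continuous_map_in_subtopology
  proof
    show "continuous_map (Dpow \<theta>) (Dpow \<theta>) (H \<circ> K)" using continuous_map_compose[OF Kc H_cont] .
    show "H \<circ> K \<in> P \<rightarrow> Y" unfolding Y_def by auto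
  qed
  have sY: "subtopology (Dpow \<theta>) Y = subtopology (subtopology (Dpow \<theta>) X) Y"
    using YX by (simp add: subtopology_subtopology Int_absorb1)
  have c2: "continuous_map (subtopology (Dpow \<theta>) Y) (Dpow \<theta>) (Ki \<circ> Hi)"
  proof -
    have "continuous_map (subtopology (Dpow \<theta>) Y) (Dpow \<theta>) Hi"
      unfolding sY by (rule continuous_map_from_subtopology[OF Hi_c])
    then show ?thesis using continuous_map_compose Kic by blast
  qed
  have hms: "homeomorphic_maps (Dpow \<theta>) (subtopology (Dpow \<theta>) Y) (H \<circ> K) (Ki \<circ> Hi)"
    unfolding homeomorphic_maps_def
  proof (intro conjI c1 c2 ballI)
    fix x assume x: "x \<in> P"
    show "(Ki \<circ> Hi) ((H \<circ> K) x) = x" using HiH KP KiK x by simp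
  next
    fix y assume "y \<in> topspace (subtopology (Dpow \<theta>) Y)"
    then have "y \<in> Y" by simp
    then obtain z where z: "z \<in> P" "y = H (K z)" unfolding Y_def by blast
    show "(H \<circ> K) ((Ki \<circ> Hi) y) = y" using z HiH KP KiK by simp
  qed
  have hm': "homeomorphic_map (Dpow \<theta>) (subtopology (Dpow \<theta>) Y) (H \<circ> K)"
    using hms homeomorphic_map_maps by blast
  have res: "\<forall>x0\<in>P. \<forall>x1\<in>P. \<forall>\<xi>\<in>Xi. \<xi> \<subseteq> \<theta> \<longrightarrow>
          (restrict x0 \<xi> = restrict x1 \<xi> \<longleftrightarrow> restrict ((H \<circ> K) x0) \<xi> = restrict ((H \<circ> K) x1) \<xi>)"
  proof (intro ballI impI)
    fix x0 x1 \<xi> assume x0: "x0 \<in> P" and x1: "x1 \<in> P" and xi: "\<xi> \<in> Xi" "\<xi> \<subseteq> \<theta>"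
    have "restrict x0 \<xi> = restrict x1 \<xi> \<longleftrightarrow> restrict (K x0) \<xi> = restrict (K x1) \<xi>" using Kres xi x0 x1 by blast
    also have "\<dots> \<longleftrightarrow> restrict (H (K x0)) \<xi> = restrict (H (K x1)) \<xi>"
      using rs[OF _ _ xi] KP x0 x1 by blast
    finally show "restrict x0 \<xi> = restrict x1 \<xi> \<longleftrightarrow> restrict ((H \<circ> K) x0) \<xi> = restrict ((H \<circ> K) x1) \<xi>"
      by simp
  qed
  show "H ` K ` P \<in> IPS \<theta>" unfolding IPS_def Y_def[symmetric]
    using YP hm' res by blast
  show "H ` K ` P \<subseteq> X" using YX Y_def by simp
qed

end

theorem theorem3p17:
  fixes \<theta> :: "ord1 list set"
    and X :: "(ord1 list \<Rightarrow> nat \<Rightarrow> nat) set"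
    and F :: "(ord1 list \<Rightarrow> nat \<Rightarrow> nat) \<Rightarrow> (nat \<Rightarrow> nat)"
  assumes "\<theta> \<in> Xi"
    and "X \<in> IPS \<theta>"
    and "continuous_map (Dpow \<theta>) euclidean F"
  shows "\<exists>Y\<in>IPS \<theta>. Y \<subseteq> X \<and>
    ((\<forall>i\<in>\<theta>. \<forall>y\<in>Y. F y \<notin> proj_at Y i) \<or>
     (\<exists>j\<in>\<theta>. (\<forall>y\<in>Y. F y = y j) \<and>
        (\<forall>i\<in>\<theta>. i \<noteq> j \<longrightarrow> (\<forall>y\<in>Y. F y \<notin> proj_at Y i))))"
proof -
  have XI: "X \<subseteq> topspace (Dpow \<theta>) \<and>
     (\<exists>H. homeomorphic_map (Dpow \<theta>) (subtopology (Dpow \<theta>) X) H \<and>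
       (\<forall>x0\<in>topspace (Dpow \<theta>). \<forall>x1\<in>topspace (Dpow \<theta>). \<forall>\<xi>\<in>Xi. \<xi> \<subseteq> \<theta> \<longrightarrow>
          (restrict x0 \<xi> = restrict x1 \<xi> \<longleftrightarrow> restrict (H x0) \<xi> = restrict (H x1) \<xi>)))"
    using assms(2) by (simp add: IPS_def)
  then obtain H where H: "homeomorphic_map (Dpow \<theta>) (subtopology (Dpow \<theta>) X) H"
    "\<forall>x0\<in>topspace (Dpow \<theta>). \<forall>x1\<in>topspace (Dpow \<theta>). \<forall>\<xi>\<in>Xi. \<xi> \<subseteq> \<theta> \<longrightarrow>
          (restrict x0 \<xi> = restrict x1 \<xi> \<longleftrightarrow> restrict (H x0) \<xi> = restrict (H x1) \<xi>)"
    by blast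
  obtain Hi where Hi: "homeomorphic_maps (Dpow \<theta>) (subtopology (Dpow \<theta>) X) H Hi"
    using H(1) homeomorphic_map_maps by blast
  interpret ips \<theta> X H Hi
  proof
    show "\<theta> \<in> Xi" by (rule assms(1))
    show "homeomorphic_maps (Dpow \<theta>) (subtopology (Dpow \<theta>) X) H Hi" by (rule Hi)
    fix x0 x1 \<xi> assume "x0 \<in> topspace (Dpow \<theta>)" "x1 \<in> topspace (Dpow \<theta>)" "\<xi> \<in> Xi" "\<xi> \<subseteq> \<theta>"
    then show "(restrict x0 \<xi> = restrict x1 \<xi>) = (restrict (H x0) \<xi> = restrict (H x1) \<xi>)"
      using H(2) by blast
  qed
  show ?thesis
  proof (cases "\<exists>j\<in>\<theta>. \<exists>Op. openin (Dpow \<theta>) Op \<and> Op \<noteq> {} \<and> (\<forall>x\<in>Op. F (H x) = H x j)")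
    case True
    then obtain j Op where j: "j \<in> \<theta>" and Op: "openin (Dpow \<theta>) Op" "Op \<noteq> {}" "\<forall>x\<in>Op. F (H x) = H x j"
      by blast
    obtain x0 where x0: "x0 \<in> Op" using Op(2) by blast
    have x0P: "x0 \<in> P" using x0 openin_subset[OF Op(1)] by blast
    obtain C0 L0 where C0: "finite C0" "C0 \<subseteq> \<theta>" "\<forall>y\<in>P. (\<forall>t\<in>C0. \<forall>q<L0. y t q = x0 t q) \<longrightarrow> y \<in> Op"
      using openin_cyl_inside[OF Op(1) x0] by blast
    define W0 where "W0 z t = (if t \<in> C0 then map (x0 t) [0..<L0] else [])" for z :: pt and t
    have inv0: "Inv \<theta> {} W0"
    proof (rule InvI)
      show "\<exists>C. finite C \<and> C \<subseteq> \<theta> \<and> (\<forall>z\<in>P. \<forall>t. t \<notin> C \<longrightarrow> W0 z t = [])"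
        using C0 unfolding W0_def by (intro exI[of _ C0]) auto
      show "\<forall>z\<in>P. \<forall>t. set (W0 z t) \<subseteq> {0, 1}"
      proof (intro ballI allI)
        fix z t
        show "set (W0 z t) \<subseteq> {0, 1}"
        proof (cases "t \<in> C0")
          case True
          then have "t \<in> \<theta>" using C0 by blast
          then have "\<forall>q. x0 t q \<in> {0,1}" using x0P by (simp add: inP_iff)
          then show ?thesis using True unfolding W0_def by (simp add: image_subset_iff)
        qed (simp add: W0_def)
      qed
    qed (auto simp: W0_def)
    have Bsub: "Box \<theta> W0 z \<subseteq> Op" for z
    proof
      fix y assume y: "y \<in> Box \<theta> W0 z"
      then have yP: "y \<in> P" by (simp add: Box_def)
      have "\<forall>t\<in>C0. \<forall>q<L0. y t q = x0 t q"
      proof (intro ballI allI impI)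
        fix t q assume "t \<in> C0" "q < L0"
        then show "y t q = x0 t q" using y by (simp add: Box_def W0_def)
      qed
      then show "y \<in> Op" using C0(3) yP by blast
    qed
    have ndA: "\<exists>x\<in>Op'. H x j \<noteq> H x i" if "i \<in> \<theta> - {j}" "openin (Dpow \<theta>) Op'" "Op' \<noteq> {}" for i Op'
      using nd_pair[of i j Op'] that j by blast
    obtain K Ki where K: "\<forall>z\<in>P. K z \<in> P" "continuous_map (Dpow \<theta>) (Dpow \<theta>) K" "continuous_map (Dpow \<theta>) (Dpow \<theta>) Ki"
       "\<forall>z\<in>P. Ki (K z) = z"
       "\<forall>\<xi>. \<xi> \<in> Xi \<longrightarrow> \<xi> \<subseteq> \<theta> \<longrightarrow> (\<forall>z\<in>P. \<forall>w\<in>P. restrict z \<xi> = restrict w \<xi> \<longleftrightarrow> restrict (K z) \<xi> = restrict (K w) \<xi>)"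
       "\<forall>z\<in>P. K z \<in> Box \<theta> W0 z" "\<forall>i\<in>\<theta> - {j}. \<forall>z\<in>P. \<forall>w\<in>P. H (K z) j \<noteq> H (K w) i"
      using main_constr[where A="\<theta> - {j}", OF inv0 h_cont[OF j]] ndA by blast
    define Y where "Y = H ` K ` P"
    have Y: "Y \<in> IPS \<theta>" "Y \<subseteq> X" using Y_IPS[OF K(1-5)] unfolding Y_def by auto
    have Fj: "\<forall>y\<in>Y. F y = y j"
    proof
      fix y assume "y \<in> Y"
      then obtain z where z: "z \<in> P" "y = H (K z)" unfolding Y_def by blast
      have "K z \<in> Op" using K(6) z(1) Bsub by blast
      then show "F y = y j" using Op(3) z(2) by simp
    qed
    have other: "\<forall>i\<in>\<theta>. i \<noteq> j \<longrightarrow> (\<forall>y\<in>Y. F y \<notin> proj_at Y i)"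
    proof (intro ballI impI)
      fix i y assume i: "i \<in> \<theta>" "i \<noteq> j" and y: "y \<in> Y"
      then obtain z where z: "z \<in> P" "y = H (K z)" unfolding Y_def by blast
      show "F y \<notin> proj_at Y i"
      proof
        assume "F y \<in> proj_at Y i"
        then obtain y' where y': "y' \<in> Y" "F y = y' i" unfolding proj_at_def by blast
        then obtain w where w: "w \<in> P" "y' = H (K w)" unfolding Y_def by blast
        have "F y = H (K z) j" using Fj y z(2) by simp
        then have "H (K z) j = H (K w) i" using y' w by simp
        moreover have "H (K z) j \<noteq> H (K w) i" using K(7) i z(1) w(1) by blast
        ultimately show False by simp
      qed
    qed
    show ?thesis using Y Fj other j by blast
  next
    case False
    define W0 where "W0 z t = ([] :: nat list)" for z :: pt and t :: "ord1 list"
    have inv0: "Inv \<theta> {} W0"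
      by (rule InvI) (auto simp: W0_def)
    have Pc: "continuous_map (Dpow \<theta>) euclidean (F \<circ> H)"
      using continuous_map_compose[OF H_cont assms(3)] .
    have nd: "\<exists>x\<in>Op. (F \<circ> H) x \<noteq> H x i" if "i \<in> \<theta>" "openin (Dpow \<theta>) Op" "Op \<noteq> {}" for i Op
      using False that by auto
    obtain K Ki where K: "\<forall>z\<in>P. K z \<in> P" "continuous_map (Dpow \<theta>) (Dpow \<theta>) K" "continuous_map (Dpow \<theta>) (Dpow \<theta>) Ki"
       "\<forall>z\<in>P. Ki (K z) = z"
       "\<forall>\<xi>. \<xi> \<in> Xi \<longrightarrow> \<xi> \<subseteq> \<theta> \<longrightarrow> (\<forall>z\<in>P. \<forall>w\<in>P. restrict z \<xi> = restrict w \<xi> \<longleftrightarrow> restrict (K z) \<xi> = restrict (K w) \<xi>)"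
       "\<forall>i\<in>\<theta>. \<forall>z\<in>P. \<forall>w\<in>P. (F \<circ> H) (K z) \<noteq> H (K w) i"
      using main_constr[OF inv0 Pc subset_refl] nd by blast
    define Y where "Y = H ` K ` P"
    have Y: "Y \<in> IPS \<theta>" "Y \<subseteq> X" using Y_IPS[OF K(1-5)] unfolding Y_def by auto
    have "\<forall>i\<in>\<theta>. \<forall>y\<in>Y. F y \<notin> proj_at Y i"
    proof (intro ballI)
      fix i y assume i: "i \<in> \<theta>" and y: "y \<in> Y"
      then obtain z where z: "z \<in> P" "y = H (K z)" unfolding Y_def by blast
      show "F y \<notin> proj_at Y i"
      proof
        assume "F y \<in> proj_at Y i"
        then obtain y' where y': "y' \<in> Y" "F y = y' i" unfolding proj_at_def by blast
        then obtain w where w: "w \<in> P" "y' = H (K w)" unfolding Y_def by blast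
        have "(F \<circ> H) (K z) \<noteq> H (K w) i" using K(6) i z(1) w(1) by blast
        then show False using y' w z(2) by simp
      qed
    qed
    then show ?thesis using Y by blast
  qed
qed


end
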